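(* Let $I$ be a non-empty descent set with $s=s(I)$ and Naruse-Newton coefficients $(C_0,\ldots,C_s)$, and let $a,b$ be integers with $s\ge b>a\ge 0$. Then $\frac{C_a(I)}{C_b(I)}=\frac{a!}{b!}$ if and only if $w(I)\ge b$.
   Context: Partitions are drawn as Young diagrams $\mathbb{D}(\lambda)$ in English notation; $c_{i,j}$ is the cell in row $i$, column $j$; $\lambda'$ is the conjugate partition ($\lambda'_j$ = number of cells in column $j$). The hook length $h_\lambda(c)$ is the number of cells of $\mathbb{D}(\lambda)$ weakly right of $c$ in its row or weakly below $c$ in its column (counting $c$ once). For $\mu\subseteq\lambda$, an excited diagram of $\lambda/\mu$ is a subset of $\mathbb{D}(\lambda)$ obtained from $\mathbb{D}(\mu)$ by repeatedly replacing a cell $c_{i,j}\in D$ by $c_{i+1,j+1}$, allowed iff $c_{i+1,j+1}\in\mathbb{D}(\lambda)$ and none of $c_{i,j+1},c_{i+1,j},c_{i+1,j+1}$ lies in $D$; $\mathbb{E}(\lambda/\mu)$ is their set. A ribbon with $n$ cells is read from its lower-left to its upper-right cell, each successive cell directly right of or directly above the previous; it corresponds to the set of $i\in\{1,\ldots,n-1\}$ with cell $i$ directly below cell $i+1$. A descent set is a non-empty finite set $I$ of positive integers; $\lambda^I$ is the unique partition with $\lambda^I_1=\lambda^I_2$ such that the cells $c_{i,j}\in\mathbb{D}(\lambda^I)$ with fewer than three of $c_{i,j+1},c_{i+1,j},c_{i+1,j+1}$ in $\mathbb{D}(\lambda^I)$ form a ribbon corresponding to $I$; this ribbon is $\mathbb{D}(\lambda^I)\setminus\mathbb{D}(\mu^I)$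 for a partition $\mu^I$. Let $s(I)=\lambda^I_1-1$. Naruse-Newton coefficients: every excited diagram of $\lambda^I/\mu^I$ meets row 1 in $\{c_{1,1},\ldots,c_{1,r}\}$, $0\le r\le s$; for $0\le j\le s(I)$, $C_j(I)=\sum_D\prod_{c\in D,\,c\notin\text{row }1}h_{\lambda^I}(c)$, summed over $D\in\mathbb{E}(\lambda^I/\mu^I)$ with exactly $s-j$ cells in row 1. $w(I)$ is the number of integers $j$ with $1\le j\le s(I)+1$ and $(\lambda^I)'_j=2$. *)

theory Defs
  imports Main "HOL.Real"
begin

text \<open>Cells are pairs (row, column), 1-indexed, English notation (rows increase downwards).
A partition is a weakly decreasing list of positive naturals.\<close>

type_synonym cell = "nat \<times> nat"

definition is_partition :: "nat list \<Rightarrow> bool" where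
  "is_partition lam \<longleftrightarrow> sorted_wrt (\<ge>) lam \<and> 0 \<notin> set lam"

definition part :: "nat list \<Rightarrow> nat \<Rightarrow> nat" where
  "part lam i = (if 1 \<le> i \<and> i \<le> length lam then lam ! (i - 1) else 0)"

definition diagram :: "nat list \<Rightarrow> cell set" where
  "diagram lam = {(i, j). 1 \<le> i \<and> 1 \<le> j \<and> j \<le> part lam i}"

definition conj_part :: "nat list \<Rightarrow> nat \<Rightarrow> nat" where
  "conj_part lam j = card {i. (i, j) \<in> diagram lam}"

definition hook :: "nat list \<Rightarrow> cell \<Rightarrow> nat" where
  "hook lam c = card {d \<in> diagram lam.
      (fst d = fst c \<and> snd d \<ge> snd c) \<or> (snd d = snd c \<and> fst d \<ge> fst c)}"

inductive_set excited :: "nat list \<Rightarrow> nat list \<Rightarrow> cell set set"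
  for lam mu where
  base: "diagram mu \<in> excited lam mu"
| move: "\<lbrakk> D \<in> excited lam mu; (i, j) \<in> D; (Suc i, Suc j) \<in> diagram lam;
          (i, Suc j) \<notin> D; (Suc i, j) \<notin> D; (Suc i, Suc j) \<notin> D \<rbrakk>
        \<Longrightarrow> insert (Suc i, Suc j) (D - {(i, j)}) \<in> excited lam mu"

definition ribbon_corr :: "cell set \<Rightarrow> nat set \<Rightarrow> bool" where
  "ribbon_corr S I \<longleftrightarrow> (\<exists>n f. n \<ge> 1 \<and> S = f ` {1..n} \<and>
      (\<forall>i\<in>{1..<n}. f (Suc i) = (fst (f i), Suc (snd (f i))) \<or>
                     (fst (f i) = Suc (fst (f (Suc i))) \<and> snd (f (Suc i)) = snd (f i))) \<and>
      I = {i \<in> {1..<n}. fst (f i) = Suc (fst (f (Suc i))) \<and> snd (f (Suc i)) = snd (f i)})"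

definition outer_cells :: "nat list \<Rightarrow> cell set" where
  "outer_cells lam = {(i, j) \<in> diagram lam.
      \<not> ((i, Suc j) \<in> diagram lam \<and> (Suc i, j) \<in> diagram lam \<and> (Suc i, Suc j) \<in> diagram lam)}"

definition lamI :: "nat set \<Rightarrow> nat list" where
  "lamI I = (THE lam. is_partition lam \<and> part lam 1 = part lam 2 \<and>
                      ribbon_corr (outer_cells lam) I)"

definition muI :: "nat set \<Rightarrow> nat list" where
  "muI I = (THE mu. is_partition mu \<and>
                    diagram mu = diagram (lamI I) - outer_cells (lamI I))"

definition sI :: "nat set \<Rightarrow> nat" where
  "sI I = part (lamI I) 1 - 1"

definition NN_coeff :: "nat set \<Rightarrow> nat \<Rightarrow> nat" where
  "NN_coeff I j = (\<Sum>D \<in> {D \<in> excited (lamI I) (muI I).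
                              card {c \<in> D. fst c = 1} = sI I - j}.
                     \<Prod>c \<in> {c \<in> D. fst c \<noteq> 1}. hook (lamI I) c)"

definition wI :: "nat set \<Rightarrow> nat" where
  "wI I = card {j. 1 \<le> j \<and> j \<le> sI I + 1 \<and> conj_part (lamI I) j = 2}"

end

theory Submission
  imports Defs
begin


lemma init_seg:
  fixes A :: "nat set"
  assumes "finite A" "\<forall>x\<in>A. 1 \<le> x" "\<forall>x\<in>A. \<forall>y. 1 \<le> y \<longrightarrow> y \<le> x \<longrightarrow> y \<in> A"
  shows "A = {1..card A}"
proof (cases "A = {}")
  case True then show ?thesis by simp
next
  case False
  have "A = {1..Max A}"
  proof
    show "A \<subseteq> {1..Max A}"
    proof
      fix x assume "x \<in> A"
      then show "x \<in> {1..Max A}" using assms(1,2) Max_ge by simp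
    qed
    show "{1..Max A} \<subseteq> A"
    proof
      fix y assume y: "y \<in> {1..Max A}"
      have "Max A \<in> A" using assms(1) False by (rule Max_in)
      then show "y \<in> A" using assms(3) y by simp
    qed
  qed
  then show ?thesis by (metis card_atLeastAtMost diff_Suc_1)
qed

context
  fixes L :: "nat list"
  assumes P: "is_partition L"
begin

lemma part_pos: "1 \<le> i \<Longrightarrow> i \<le> length L \<Longrightarrow> 1 \<le> part L i"
proof -
  assume a: "1 \<le> i" "i \<le> length L"
  have "L ! (i-1) \<in> set L" using a by simp
  moreover have "0 \<notin> set L" using P unfolding is_partition_def by simp
  ultimately have "L ! (i-1) \<noteq> 0" by metis
  then show ?thesis using a unfolding part_def by simp
qed

lemma part_zero: "length L < i \<Longrightarrow> part L i = 0"
  unfolding part_def by simp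

lemma part_anti: "1 \<le> i \<Longrightarrow> i \<le> i' \<Longrightarrow> part L i' \<le> part L i"
proof -
  assume a: "1 \<le> i" "i \<le> i'"
  show ?thesis
  proof (cases "i' \<le> length L")
    case True
    have s: "sorted_wrt (\<ge>) L" using P unfolding is_partition_def by simp
    show ?thesis
    proof (cases "i = i'")
      case False
      then have "i - 1 < i' - 1" using a by simp
      then have "L ! (i'-1) \<le> L ! (i-1)" using s True a sorted_wrt_nth_less[OF s] by auto
      then show ?thesis using a True unfolding part_def by auto
    qed simp
  next
    case False then show ?thesis by (simp add: part_zero)
  qed
qed

lemma diag_mem: "(i,j) \<in> diagram L \<longleftrightarrow> 1 \<le> i \<and> 1 \<le> j \<and> j \<le> part L i"
  unfolding diagram_def by simp

lemma diag_closed: "(i,j) \<in> diagram L \<Longrightarrow> 1 \<le> i' \<Longrightarrow> i' \<le> i \<Longrightarrow> 1 \<le> j' \<Longrightarrow> j' \<le> j \<Longrightarrow> (i',j') \<in> diagram L"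
  unfolding diag_mem using part_anti by (meson order_trans)

lemma diag_finite: "finite (diagram L)"
proof -
  have "diagram L \<subseteq> {1..length L} \<times> {1..part L 1}"
  proof
    fix c assume "c \<in> diagram L"
    then obtain i j where c: "c = (i,j)" "1 \<le> i" "1 \<le> j" "j \<le> part L i" unfolding diagram_def by auto
    then have "part L i \<noteq> 0" by simp
    then have "i \<le> length L" using part_zero by (meson not_le)
    moreover have "part L i \<le> part L 1" using part_anti c(2) by simp
    ultimately show "c \<in> {1..length L} \<times> {1..part L 1}" using c by simp
  qed
  then show ?thesis by (rule finite_subset) simp
qed

lemma row_set: "1 \<le> i \<Longrightarrow> {j. (i,j) \<in> diagram L} = {1..part L i}"
  unfolding diag_mem by auto

lemma part_card: "1 \<le> i \<Longrightarrow> part L i = card {j. (i,j) \<in> diagram L}"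
  using row_set by simp

lemma col_set: "{i. (i,j) \<in> diagram L} = {1..conj_part L j}"
proof -
  have f: "finite {i. (i,j) \<in> diagram L}"
  proof (rule finite_subset)
    show "{i. (i,j) \<in> diagram L} \<subseteq> fst ` diagram L" by force
  qed (use diag_finite in simp)
  show ?thesis unfolding conj_part_def
    apply (rule init_seg[OF f])
    using diag_closed by (auto simp: diag_mem)
qed

lemma diag_mem_conj: "(i,j) \<in> diagram L \<longleftrightarrow> 1 \<le> i \<and> i \<le> conj_part L j"
proof -
  have "(i,j) \<in> diagram L \<longleftrightarrow> i \<in> {i. (i,j) \<in> diagram L}" by simp
  then show ?thesis using col_set by simp
qed

lemma conj_anti: "1 \<le> j \<Longrightarrow> j \<le> j' \<Longrightarrow> conj_part L j' \<le> conj_part L j"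
proof -
  assume a: "1 \<le> j" "j \<le> j'"
  have "{i. (i,j') \<in> diagram L} \<subseteq> {i. (i,j) \<in> diagram L}"
  proof
    fix x assume "x \<in> {i. (i,j') \<in> diagram L}"
    then have "(x,j') \<in> diagram L" by simp
    then have "(x,j) \<in> diagram L" using diag_closed[of x j' x j] a by (simp add: diag_mem)
    then show "x \<in> {i. (i,j) \<in> diagram L}" by simp
  qed
  then show ?thesis using col_set by (metis card_atLeastAtMost card_mono diff_Suc_1 finite_atLeastAtMost)
qed

lemma hook_formula:
  assumes "(i,j) \<in> diagram L"
  shows "hook L (i,j) = (part L i - j) + (conj_part L j - i) + 1"
proof -
  have ij: "1 \<le> i" "1 \<le> j" "j \<le> part L i" "i \<le> conj_part L j" using assms diag_mem diag_mem_conj by auto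
  have seteq: "{d \<in> diagram L. (fst d = fst (i,j) \<and> snd d \<ge> snd (i,j)) \<or> (snd d = snd (i,j) \<and> fst d \<ge> fst (i,j))}
      = (\<lambda>y. (i,y)) ` {j..part L i} \<union> (\<lambda>x. (x,j)) ` {Suc i..conj_part L j}"
  proof (rule set_eqI)
    fix d :: cell
    obtain x y where d: "d = (x,y)" by (cases d)
    have col: "\<And>x. 1 \<le> x \<Longrightarrow> x \<le> conj_part L j \<Longrightarrow> (x,j) \<in> diagram L"
      using diag_mem_conj by blast
    have row: "\<And>y. 1 \<le> y \<Longrightarrow> y \<le> part L i \<Longrightarrow> (i,y) \<in> diagram L"
      using diag_mem ij by blast
    have "(x,y) \<in> {d \<in> diagram L. (fst d = fst (i,j) \<and> snd d \<ge> snd (i,j)) \<or> (snd d = snd (i,j) \<and> fst d \<ge> fst (i,j))}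
      \<longleftrightarrow> (x = i \<and> j \<le> y \<and> y \<le> part L i) \<or> (y = j \<and> Suc i \<le> x \<and> x \<le> conj_part L j)"
    proof
      assume h: "(x,y) \<in> {d \<in> diagram L. (fst d = fst (i,j) \<and> snd d \<ge> snd (i,j)) \<or> (snd d = snd (i,j) \<and> fst d \<ge> fst (i,j))}"
      then have m: "(x,y) \<in> diagram L" by simp
      have m1: "y \<le> part L x" using m diag_mem by blast
      have m2: "x \<le> conj_part L y" using m diag_mem_conj by blast
      show "(x = i \<and> j \<le> y \<and> y \<le> part L i) \<or> (y = j \<and> Suc i \<le> x \<and> x \<le> conj_part L j)"
      proof (cases "x = i")
        case True then show ?thesis using h m1 by auto
      next
        case False then show ?thesis using h m2 by auto
      qed
    next
      assume "(x = i \<and> j \<le> y \<and> y \<le> part L i) \<or> (y = j \<and> Suc i \<le> x \<and> x \<le> conj_part L j)"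
      then show "(x,y) \<in> {d \<in> diagram L. (fst d = fst (i,j) \<and> snd d \<ge> snd (i,j)) \<or> (snd d = snd (i,j) \<and> fst d \<ge> fst (i,j))}"
      proof
        assume "x = i \<and> j \<le> y \<and> y \<le> part L i"
        then show ?thesis using row[of y] ij by auto
      next
        assume "y = j \<and> Suc i \<le> x \<and> x \<le> conj_part L j"
        then show ?thesis using col[of x] ij by auto
      qed
    qed
    then show "d \<in> {d \<in> diagram L. (fst d = fst (i,j) \<and> snd d \<ge> snd (i,j)) \<or> (snd d = snd (i,j) \<and> fst d \<ge> fst (i,j))}
      \<longleftrightarrow> d \<in> (\<lambda>y. (i,y)) ` {j..part L i} \<union> (\<lambda>x. (x,j)) ` {Suc i..conj_part L j}"
      unfolding d by auto
  qed
  have cardeq: "card ((\<lambda>y. (i,y)) ` {j..part L i} \<union> (\<lambda>x. (x,j)) ` {Suc i..conj_part L j})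
     = card {j..part L i} + card {Suc i..conj_part L j}"
    by (subst card_Un_disjoint) (auto simp: card_image inj_on_def)
  have "hook L (i,j) = card {j..part L i} + card {Suc i..conj_part L j}"
    by (simp only: hook_def seteq cardeq)
  also have "\<dots> = (part L i + 1 - j) + (conj_part L j - i)" by simp
  finally show ?thesis using ij by linarith
qed

lemma hook_pos: "c \<in> diagram L \<Longrightarrow> 1 \<le> hook L c"
  using hook_formula by (cases c) simp

end

lemma tl_partition: "is_partition L \<Longrightarrow> is_partition (tl L)"
  unfolding is_partition_def by (cases L) auto

lemma part_tl: "1 \<le> i \<Longrightarrow> part (tl L) i = part L (Suc i)"
  unfolding part_def by (cases L) (auto simp: nth_tl)

lemma diag_tl: "(i,j) \<in> diagram (tl L) \<longleftrightarrow> 1 \<le> i \<and> (Suc i, j) \<in> diagram L"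
  unfolding diagram_def using part_tl by auto

lemma conj_tl: assumes "is_partition L" shows "conj_part (tl L) j = conj_part L j - 1"
proof -
  have eq: "{i. (i,j) \<in> diagram (tl L)} = {1..conj_part L j - 1}"
    by (auto simp: diag_tl diag_mem_conj[OF assms])
  have "conj_part (tl L) j = card {i. (i,j) \<in> diagram (tl L)}" by (simp add: conj_part_def)
  also have "\<dots> = conj_part L j - 1" unfolding eq by simp
  finally show ?thesis .
qed

lemma hook_tl: assumes "is_partition L" "(i,j) \<in> diagram (tl L)"
  shows "hook (tl L) (i,j) = hook L (Suc i, j)"
proof -
  have d: "(Suc i, j) \<in> diagram L" and i1: "1 \<le> i" using assms(2) diag_tl by auto
  have "hook (tl L) (i,j) = (part (tl L) i - j) + (conj_part (tl L) j - i) + 1"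
    by (rule hook_formula[OF tl_partition[OF assms(1)] assms(2)])
  also have "\<dots> = (part L (Suc i) - j) + (conj_part L j - 1 - i) + 1"
    using part_tl[OF i1] conj_tl[OF assms(1)] by simp
  also have "\<dots> = hook L (Suc i, j)"
    using hook_formula[OF assms(1) d] by simp
  finally show ?thesis .
qed


definition shape :: "cell set \<Rightarrow> bool" where
  "shape D \<longleftrightarrow> finite D \<and> (\<forall>c\<in>D. 1 \<le> fst c \<and> 1 \<le> snd c) \<and>
     (\<forall>c\<in>D. \<forall>i' j'. 1 \<le> i' \<longrightarrow> i' \<le> fst c \<longrightarrow> 1 \<le> j' \<longrightarrow> j' \<le> snd c \<longrightarrow> (i',j') \<in> D)"

lemma shapeD:
  assumes "shape D"
  shows "finite D" "\<And>i j. (i,j) \<in> D \<Longrightarrow> 1 \<le> i" "\<And>i j. (i,j) \<in> D \<Longrightarrow> 1 \<le> j"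
    "\<And>i j i' j'. (i,j) \<in> D \<Longrightarrow> 1 \<le> i' \<Longrightarrow> i' \<le> i \<Longrightarrow> 1 \<le> j' \<Longrightarrow> j' \<le> j \<Longrightarrow> (i',j') \<in> D"
  using assms unfolding shape_def by (auto simp del: One_nat_def)

lemma shape_partition:
  assumes sh: "shape D"
  shows "\<exists>L. is_partition L \<and> diagram L = D"
proof -
  note S = shapeD[OF sh]
  define rowc where "rowc i = card {j. (i,j) \<in> D}" for i
  define R where "R = {i. \<exists>j. (i,j) \<in> D}"
  define N where "N = card R"
  have finR: "finite R"
  proof (rule finite_subset)
    show "R \<subseteq> fst ` D" unfolding R_def by force
  qed (use S(1) in simp)
  have rowfin: "finite {j. (i,j) \<in> D}" for i
  proof (rule finite_subset)
    show "{j. (i,j) \<in> D} \<subseteq> snd ` D" by force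
  qed (use S(1) in simp)
  have RN: "R = {1..N}" unfolding N_def
  proof (rule init_seg[OF finR])
    show "\<forall>x\<in>R. 1 \<le> x" unfolding R_def using S(2) by blast
    show "\<forall>x\<in>R. \<forall>y. 1 \<le> y \<longrightarrow> y \<le> x \<longrightarrow> y \<in> R"
    proof (intro ballI allI impI)
      fix x y assume "x \<in> R" "1 \<le> y" "y \<le> x"
      then obtain j where "(x,j) \<in> D" unfolding R_def by blast
      then have "(y,j) \<in> D" using S(3)[OF \<open>(x,j) \<in> D\<close>] S(4) \<open>1 \<le> y\<close> \<open>y \<le> x\<close> by blast
      then show "y \<in> R" unfolding R_def by blast
    qed
  qed
  have rowset: "{j. (i,j) \<in> D} = {1..rowc i}" for i unfolding rowc_def
  proof (rule init_seg[OF rowfin])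
    show "\<forall>x\<in>{j. (i,j) \<in> D}. 1 \<le> x" using S(3) by blast
    show "\<forall>x\<in>{j. (i,j) \<in> D}. \<forall>y. 1 \<le> y \<longrightarrow> y \<le> x \<longrightarrow> y \<in> {j. (i,j) \<in> D}"
    proof (intro ballI allI impI)
      fix x y assume "x \<in> {j. (i,j) \<in> D}" "1 \<le> y" "y \<le> x"
      then have "(i,x) \<in> D" by simp
      then show "y \<in> {j. (i,j) \<in> D}" using S(4)[OF \<open>(i,x) \<in> D\<close> _ order_refl \<open>1 \<le> y\<close> \<open>y \<le> x\<close>] S(2) by blast
    qed
  qed
  define L where "L = map rowc [1..<Suc N]"
  have lenL: "length L = N" unfolding L_def by simp
  have partL: "part L i = (if 1 \<le> i \<and> i \<le> N then rowc i else 0)" for i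
    unfolding part_def L_def by (auto simp del: upt_Suc simp add: nth_map)
  have rowc_pos: "1 \<le> rowc i" if "1 \<le> i" "i \<le> N" for i
  proof -
    have "i \<in> R" using RN that by simp
    then obtain j where "(i,j) \<in> D" unfolding R_def by blast
    then have "{j. (i,j) \<in> D} \<noteq> {}" by blast
    then show ?thesis using rowfin unfolding rowc_def by (simp add: Suc_le_eq card_gt_0_iff)
  qed
  have rowc_mono: "rowc i' \<le> rowc i" if "1 \<le> i" "i \<le> i'" for i i'
  proof -
    have "{j. (i',j) \<in> D} \<subseteq> {j. (i,j) \<in> D}"
    proof
      fix j assume "j \<in> {j. (i',j) \<in> D}"
      then have "(i',j) \<in> D" by simp
      then show "j \<in> {j. (i,j) \<in> D}" using S(4)[OF \<open>(i',j) \<in> D\<close> that(1) that(2) _ order_refl] S(3) by blast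
    qed
    then show ?thesis unfolding rowc_def using rowfin by (simp add: card_mono)
  qed
  have "is_partition L"
    unfolding is_partition_def
  proof
    show "sorted_wrt (\<ge>) L"
      unfolding sorted_wrt_iff_nth_less
    proof (intro allI impI)
      fix a b assume ab: "a < b" "b < length L"
      have "L ! a = rowc (Suc a)" "L ! b = rowc (Suc b)" using ab unfolding L_def by (simp_all del: upt_Suc add: nth_map)
      then show "L ! b \<le> L ! a" using rowc_mono[of "Suc a" "Suc b"] ab by simp
    qed
    show "0 \<notin> set L"
    proof
      assume "0 \<in> set L"
      then obtain k where k: "k < length L" "L ! k = 0" by (metis in_set_conv_nth)
      have "L ! k = rowc (Suc k)" using k unfolding L_def by (simp del: upt_Suc add: nth_map)
      then show False using rowc_pos[of "Suc k"] k lenL by simp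
    qed
  qed
  moreover have "diagram L = D"
  proof (rule set_eqI)
    fix c :: cell
    obtain i j where c: "c = (i,j)" by (cases c)
    show "c \<in> diagram L \<longleftrightarrow> c \<in> D"
    proof (cases "1 \<le> i \<and> i \<le> N")
      case True
      have "(i,j) \<in> D \<longleftrightarrow> j \<in> {1..rowc i}" using rowset[of i] by blast
      then show ?thesis unfolding c diagram_def using True partL by auto
    next
      case False
      have "(i,j) \<notin> D"
      proof
        assume "(i,j) \<in> D"
        then have "i \<in> R" unfolding R_def by blast
        then show False using False RN by simp
      qed
      then show ?thesis unfolding c diagram_def using False partL by auto
    qed
  qed
  ultimately show ?thesis by blast
qed

lemma diagram_inj:
  assumes "is_partition a" "is_partition b" "diagram a = diagram b"
  shows "a = b"
proof -
  have len: "{i. (i,1) \<in> diagram L} = {1..length L}" if "is_partition L" for L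
  proof (rule set_eqI)
    fix i
    show "i \<in> {i. (i,1) \<in> diagram L} \<longleftrightarrow> i \<in> {1..length L}"
      using part_pos[OF that, of i] part_zero[OF that, of i] by (auto simp: diag_mem[OF that]) (meson not_le)
  qed
  have "length a = length b" using len[OF assms(1)] len[OF assms(2)] assms(3) by (metis card_atLeastAtMost diff_Suc_1)
  moreover have "a ! k = b ! k" if "k < length a" for k
  proof -
    have "a ! k = part a (Suc k)" "b ! k = part b (Suc k)" using that \<open>length a = length b\<close> unfolding part_def by auto
    then show ?thesis using part_card[OF assms(1), of "Suc k"] part_card[OF assms(2), of "Suc k"] assms(3) by simp
  qed
  ultimately show ?thesis by (rule nth_equalityI)
qed

lemma diagram_shape: "is_partition L \<Longrightarrow> shape (diagram L)"
  unfolding shape_def using diag_finite diag_closed by (auto simp: diag_mem)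

definition sh :: "cell \<Rightarrow> cell" where "sh c = (Suc (fst c), Suc (snd c))"

lemma sh_simp[simp]: "sh (i,j) = (Suc i, Suc j)" unfolding sh_def by simp

lemma sh_inj: "inj sh" unfolding inj_def sh_def by (auto simp: prod_eq_iff)

lemma outer_char:
  assumes P: "is_partition L"
  shows "c \<in> outer_cells L \<longleftrightarrow> c \<in> diagram L \<and> sh c \<notin> diagram L"
proof -
  obtain i j where c: "c = (i,j)" by (cases c)
  have "(Suc i, Suc j) \<in> diagram L \<Longrightarrow> (i, Suc j) \<in> diagram L \<and> (Suc i, j) \<in> diagram L" if "(i,j) \<in> diagram L"
    using that diag_closed[OF P, of "Suc i" "Suc j"] part_anti[OF P, of i "Suc i"] by (auto simp: diag_mem[OF P])
  then show ?thesis unfolding c outer_cells_def using part_anti[OF P, of i "Suc i"] by (auto simp: diag_mem[OF P])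
qed

lemma diag_from_outer:
  assumes P: "is_partition L"
  shows "diagram L = {(i,j). 1 \<le> j \<and> (\<exists>c\<in>outer_cells L. fst c = i \<and> j \<le> snd c)}"
proof (rule set_eqI)
  fix d :: cell
  obtain i j where d: "d = (i,j)" by (cases d)
  show "d \<in> diagram L \<longleftrightarrow> d \<in> {(i,j). 1 \<le> j \<and> (\<exists>c\<in>outer_cells L. fst c = i \<and> j \<le> snd c)}"
  proof
    assume "d \<in> diagram L"
    then have m: "1 \<le> i" "1 \<le> j" "j \<le> part L i" using d diag_mem[OF P] by auto
    have "(i, part L i) \<in> outer_cells L" unfolding outer_char[OF P] using m part_anti[OF P, of i "Suc i"] by (simp add: diag_mem[OF P])
    then show "d \<in> {(i,j). 1 \<le> j \<and> (\<exists>c\<in>outer_cells L. fst c = i \<and> j \<le> snd c)}" using d m by force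
  next
    assume "d \<in> {(i,j). 1 \<le> j \<and> (\<exists>c\<in>outer_cells L. fst c = i \<and> j \<le> snd c)}"
    then obtain c where c: "c \<in> outer_cells L" "fst c = i" "j \<le> snd c" "1 \<le> j" using d by auto
    then have "c \<in> diagram L" using outer_char[OF P] by blast
    then have "(i, snd c) \<in> diagram L" using c(2) by (cases c) simp
    then show "d \<in> diagram L" using d diag_closed[OF P, of i "snd c" i j] c by (simp add: diag_mem[OF P])
  qed
qed

definition inner :: "nat list \<Rightarrow> cell set" where
  "inner L = {(i,j). 1 \<le> i \<and> 1 \<le> j \<and> (Suc i, Suc j) \<in> diagram L}"

lemma inner_eq:
  assumes P: "is_partition L"
  shows "diagram L - outer_cells L = inner L"
proof (rule set_eqI)
  fix c :: cell
  obtain i j where c: "c = (i,j)" by (cases c)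
  have "(Suc i, Suc j) \<in> diagram L \<Longrightarrow> 1 \<le> i \<Longrightarrow> 1 \<le> j \<Longrightarrow> (i,j) \<in> diagram L"
    using diag_closed[OF P, of "Suc i" "Suc j" i j] by simp
  then show "c \<in> diagram L - outer_cells L \<longleftrightarrow> c \<in> inner L"
    unfolding c inner_def using outer_char[OF P, of "(i,j)"] by (auto simp: diag_mem[OF P])
qed

lemma inner_shape:
  assumes P: "is_partition L"
  shows "shape (inner L)"
  unfolding shape_def
proof (intro conjI ballI allI impI)
  show "finite (inner L)" using diag_finite[OF P] inner_eq[OF P] by (metis finite_Diff)
  fix c assume c: "c \<in> inner L"
  then show "1 \<le> fst c" "1 \<le> snd c" unfolding inner_def by auto
  fix i' j' assume h: "1 \<le> i'" "i' \<le> fst c" "1 \<le> j'" "j' \<le> snd c"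
  have "(Suc (fst c), Suc (snd c)) \<in> diagram L" using c unfolding inner_def by auto
  then have "(Suc i', Suc j') \<in> diagram L" using diag_closed[OF P] h by simp
  then show "(i',j') \<in> inner L" unfolding inner_def using h by simp
qed


locale dset =
  fixes I :: "nat set"
  assumes finI: "finite I" and neI: "I \<noteq> {}" and zI: "0 \<notin> I"
begin

definition n :: nat where "n = Suc (Max I)"
definition R :: "nat \<Rightarrow> nat" where "R k = 1 + card (I \<inter> {k..<n})"
definition Cc :: "nat \<Rightarrow> nat" where "Cc k = 1 + card ({1..<k} - I)"
definition F :: "nat \<Rightarrow> cell" where "F k = (R k, Cc k)"

lemma MaxI: "Max I \<in> I" using finI neI by simp
lemma I_sub: "I \<subseteq> {1..<n}"
proof
  fix x assume "x \<in> I"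
  moreover have "x \<noteq> 0" using zI \<open>x \<in> I\<close> by metis
  ultimately have "x \<le> Max I" "x \<noteq> 0" using finI by auto
  then show "x \<in> {1..<n}" unfolding n_def by simp
qed
lemma n_ge2: "2 \<le> n" using MaxI zI unfolding n_def by (cases "Max I") auto
lemma nm1_in: "n - 1 \<in> I" using MaxI unfolding n_def by simp
lemma cardI_pos: "1 \<le> card I" using finI neI by (simp add: Suc_le_eq card_gt_0_iff)

lemma stepC: "card ({1..<Suc k} - I) = card ({1..<k} - I) + (if k \<in> I \<or> k = 0 then 0 else 1)"
proof (cases "k \<in> I \<or> k = 0")
  case True
  then have "{1..<Suc k} - I = {1..<k} - I" by (auto simp: less_Suc_eq)
  then show ?thesis using True by simp
next
  case False
  then have "{1..<Suc k} - I = insert k ({1..<k} - I)" by auto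
  then show ?thesis using False by simp
qed

lemma stepR: "k < n \<Longrightarrow> card (I \<inter> {k..<n}) = card (I \<inter> {Suc k..<n}) + (if k \<in> I then 1 else 0)"
proof (cases "k \<in> I")
  case True
  assume "k < n"
  then have "I \<inter> {k..<n} = insert k (I \<inter> {Suc k..<n})" using True by auto
  then show ?thesis using True by simp
next
  case False
  assume "k < n"
  then have "I \<inter> {k..<n} = I \<inter> {Suc k..<n}" using False by (auto simp: Suc_le_eq order.order_iff_strict)
  then show ?thesis using False by simp
qed

lemma R_n: "R n = 1" unfolding R_def by simp
lemma Cc_1: "Cc 1 = 1" unfolding Cc_def by simp

lemma R_le: "R k \<le> 1 + card I"
  unfolding R_def using finI by (simp add: card_mono)

lemma R_anti: assumes "k \<le> k'" shows "R k' \<le> R k"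
proof -
  have "I \<inter> {k'..<n} \<subseteq> I \<inter> {k..<n}" using assms by auto
  then show ?thesis unfolding R_def using finI by (simp add: card_mono)
qed

lemma R_lip: assumes "k \<le> k'" shows "R k \<le> R k' + (k' - k)"
proof -
  have "I \<inter> {k..<n} \<subseteq> (I \<inter> {k'..<n}) \<union> {k..<k'}" by auto
  then have "card (I \<inter> {k..<n}) \<le> card ((I \<inter> {k'..<n}) \<union> {k..<k'})" by (simp add: card_mono)
  also have "\<dots> \<le> card (I \<inter> {k'..<n}) + card {k..<k'}" by (rule card_Un_le)
  finally show ?thesis unfolding R_def by simp
qed

lemma ident: "1 \<le> k \<Longrightarrow> k \<le> n \<Longrightarrow> Cc k + card I + 1 = R k + k"
proof (induction k rule: nat_induct_at_least)
  case base
  have "I \<inter> {1..<n} = I" using I_sub by auto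
  then show ?case unfolding Cc_def R_def by simp
next
  case (Suc k)
  have "k \<noteq> 0" using Suc by simp
  have "Cc (Suc k) = Cc k + (if k \<in> I then 0 else 1)" unfolding Cc_def using stepC[of k] \<open>k \<noteq> 0\<close> by simp
  moreover have "R k = R (Suc k) + (if k \<in> I then 1 else 0)" unfolding R_def using stepR[of k] Suc by simp
  ultimately show ?case using Suc by auto
qed

definition D0 :: "cell set" where
  "D0 = {(i,j). 1 \<le> i \<and> 1 \<le> j \<and> (\<exists>k. 1 \<le> k \<and> k \<le> n \<and> j + card I + 1 = i + k \<and> i \<le> R k)}"

lemma D0_left:
  assumes "(i,j) \<in> D0" "1 \<le> j'" "j' \<le> j" shows "(i,j') \<in> D0"
proof -
  obtain k where k: "1 \<le> i" "1 \<le> j" "1 \<le> k" "k \<le> n" "j + card I + 1 = i + k" "i \<le> R k"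
    using assms(1) unfolding D0_def by auto
  define k' where "k' = k - (j - j')"
  have "i \<le> 1 + card I" using k R_le[of k] by simp
  then have kk: "j' + card I + 1 = i + k'" "1 \<le> k'" "k' \<le> k" using k assms unfolding k'_def by auto
  then have "i \<le> R k'" using R_anti[of k' k] k by simp
  then show ?thesis unfolding D0_def using kk k assms by auto
qed

lemma D0_up:
  assumes "(i,j) \<in> D0" "1 \<le> i'" "i' \<le> i" shows "(i',j) \<in> D0"
proof -
  obtain k where k: "1 \<le> i" "1 \<le> j" "1 \<le> k" "k \<le> n" "j + card I + 1 = i + k" "i \<le> R k"
    using assms(1) unfolding D0_def by auto
  define k' where "k' = k + (i - i')"
  have "R k \<le> R n + (n - k)" using R_lip k by simp
  then have "i - i' \<le> n - k" using k assms R_n by simp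
  then have kn: "k' \<le> n" "k \<le> k'" unfolding k'_def using k by auto
  have "R k \<le> R k' + (k' - k)" using R_lip kn by simp
  then have "i' \<le> R k'" using k assms unfolding k'_def by simp
  then have "\<exists>ka. 1 \<le> ka \<and> ka \<le> n \<and> j + card I + 1 = i' + ka \<and> i' \<le> R ka"
    using kn k assms by (intro exI[of _ k']) (auto simp: k'_def)
  then show ?thesis unfolding D0_def using k assms by auto
qed

lemma D0_shape: "shape D0"
  unfolding shape_def
proof (intro conjI ballI allI impI)
  have "D0 \<subseteq> {1..1 + card I} \<times> {1..n}"
  proof
    fix c assume "c \<in> D0"
    then obtain i j k where k: "c = (i,j)" "1 \<le> i" "1 \<le> j" "1 \<le> k" "k \<le> n" "j + card I + 1 = i + k" "i \<le> R k"
      unfolding D0_def by auto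
    then show "c \<in> {1..1 + card I} \<times> {1..n}" using R_le[of k] by auto
  qed
  then show "finite D0" by (rule finite_subset) simp
  fix c assume c: "c \<in> D0"
  then show "1 \<le> fst c" "1 \<le> snd c" unfolding D0_def by auto
  fix i' j' assume h: "1 \<le> i'" "i' \<le> fst c" "1 \<le> j'" "j' \<le> snd c"
  have "(fst c, j') \<in> D0" using D0_left[of "fst c" "snd c" j'] c h by simp
  then show "(i',j') \<in> D0" using D0_up h by blast
qed

lemma D0_rows: "{j. (1,j) \<in> D0} = {j. (2,j) \<in> D0}"
proof (rule set_eqI, rule iffI)
  fix j assume "j \<in> {j. (2,j) \<in> D0}"
  then show "j \<in> {j. (1,j) \<in> D0}" using D0_up[of 2 j 1] by simp
next
  fix j assume "j \<in> {j. (1,j) \<in> D0}"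
  then obtain k where k: "1 \<le> j" "1 \<le> k" "k \<le> n" "j + card I + 1 = 1 + k" "1 \<le> R k"
    unfolding D0_def by auto
  have k2: "2 \<le> k" using k cardI_pos by simp
  have "n - 1 \<in> I \<inter> {k - 1..<n}" using nm1_in k n_ge2 by auto
  then have "1 \<le> card (I \<inter> {k - 1..<n})" using finI by (metis One_nat_def Suc_leI card_gt_0_iff empty_iff finite_Int)
  then have "2 \<le> R (k - 1)" unfolding R_def by simp
  moreover have "j + card I + 1 = 2 + (k - 1)" using k k2 by simp
  ultimately have "\<exists>k'. 1 \<le> k' \<and> k' \<le> n \<and> j + card I + 1 = 2 + k' \<and> 2 \<le> R k'"
    using k k2 by (intro exI[of _ "k - 1"]) auto
  then show "j \<in> {j. (2,j) \<in> D0}" unfolding D0_def using k by simp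
qed

lemma D0_outer:
  "(c \<in> D0 \<and> sh c \<notin> D0) \<longleftrightarrow> c \<in> F ` {1..n}"
proof -
  obtain i j where c: "c = (i,j)" by (cases c)
  have "((i,j) \<in> D0 \<and> (Suc i, Suc j) \<notin> D0) \<longleftrightarrow> (\<exists>k\<in>{1..n}. (i,j) = F k)"
  proof
    assume h: "(i,j) \<in> D0 \<and> (Suc i, Suc j) \<notin> D0"
    then obtain k where k: "1 \<le> i" "1 \<le> j" "1 \<le> k" "k \<le> n" "j + card I + 1 = i + k" "i \<le> R k"
      unfolding D0_def by auto
    have "\<not> Suc i \<le> R k" using h k unfolding D0_def by auto
    then have "i = R k" using k by simp
    moreover have "j = Cc k" using ident[of k] k \<open>i = R k\<close> by simp
    ultimately show "\<exists>k\<in>{1..n}. (i,j) = F k" using k unfolding F_def by auto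
  next
    assume "\<exists>k\<in>{1..n}. (i,j) = F k"
    then obtain k where k: "1 \<le> k" "k \<le> n" "i = R k" "j = Cc k" unfolding F_def by auto
    have e: "j + card I + 1 = i + k" using ident[of k] k by simp
    have "(i,j) \<in> D0" unfolding D0_def using k e unfolding R_def Cc_def by auto
    moreover have "(Suc i, Suc j) \<notin> D0"
    proof
      assume "(Suc i, Suc j) \<in> D0"
      then obtain k' where "Suc j + card I + 1 = Suc i + k'" "Suc i \<le> R k'" unfolding D0_def by auto
      then show False using e k by simp
    qed
    ultimately show "(i,j) \<in> D0 \<and> (Suc i, Suc j) \<notin> D0" by simp
  qed
  then show ?thesis unfolding c by auto
qed

lemma exists_lam:
  "\<exists>lam. is_partition lam \<and> part lam 1 = part lam 2 \<and> ribbon_corr (outer_cells lam) I"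
proof -
  obtain lam where P: "is_partition lam" and D: "diagram lam = D0"
    using shape_partition[OF D0_shape] by blast
  have "part lam 1 = part lam 2" using part_card[OF P, of 1] part_card[OF P, of 2] D D0_rows by simp
  moreover have outer: "outer_cells lam = F ` {1..n}"
  proof (rule set_eqI)
    fix c
    show "c \<in> outer_cells lam \<longleftrightarrow> c \<in> F ` {1..n}"
      by (simp only: outer_char[OF P] D D0_outer)
  qed
  moreover have "ribbon_corr (outer_cells lam) I"
    unfolding ribbon_corr_def
  proof (intro exI conjI)
    show "1 \<le> n" using n_ge2 by simp
    show "outer_cells lam = F ` {1..n}" by (rule outer)
    have st: "(F (Suc i) = (fst (F i), Suc (snd (F i))) \<and> i \<notin> I) \<or>
          (fst (F i) = Suc (fst (F (Suc i))) \<and> snd (F (Suc i)) = snd (F i) \<and> i \<in> I)"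
      if "i \<in> {1..<n}" for i
    proof -
      have "R i = R (Suc i) + (if i \<in> I then 1 else 0)" unfolding R_def using stepR[of i] that by simp
      moreover have "Cc (Suc i) = Cc i + (if i \<in> I then 0 else 1)" unfolding Cc_def using stepC[of i] that by simp
      ultimately show ?thesis unfolding F_def by auto
    qed
    show "\<forall>i\<in>{1..<n}. F (Suc i) = (fst (F i), Suc (snd (F i))) \<or>
          (fst (F i) = Suc (fst (F (Suc i))) \<and> snd (F (Suc i)) = snd (F i))"
      using st by blast
    show "I = {i \<in> {1..<n}. fst (F i) = Suc (fst (F (Suc i))) \<and> snd (F (Suc i)) = snd (F i)}"
    proof (rule set_eqI)
      fix i
      show "i \<in> I \<longleftrightarrow> i \<in> {i \<in> {1..<n}. fst (F i) = Suc (fst (F (Suc i))) \<and> snd (F (Suc i)) = snd (F i)}"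
      proof (cases "i \<in> {1..<n}")
        case True
        then show ?thesis using st[OF True] by (auto simp: prod_eq_iff)
      next
        case False
        then show ?thesis using I_sub by auto
      qed
    qed
  qed
  ultimately show ?thesis using P by blast
qed

definition DD :: "cell set" where
  "DD = {(i,j). 1 \<le> j \<and> (\<exists>c\<in>F ` {1..n}. fst c = i \<and> j \<le> snd c)}"

lemma unique_lam:
  assumes P: "is_partition L" and eq: "part L 1 = part L 2" and rc: "ribbon_corr (outer_cells L) I"
  shows "diagram L = DD"
proof -
  obtain m f where m1: "1 \<le> m" and Of: "outer_cells L = f ` {1..m}"
    and steps: "\<forall>i\<in>{1..<m}. f (Suc i) = (fst (f i), Suc (snd (f i))) \<or>
                     (fst (f i) = Suc (fst (f (Suc i))) \<and> snd (f (Suc i)) = snd (f i))"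
    and Ieq: "I = {i \<in> {1..<m}. fst (f i) = Suc (fst (f (Suc i))) \<and> snd (f (Suc i)) = snd (f i)}"
    using rc unfolding ribbon_corr_def by blast
  have upI: "fst (f i) = Suc (fst (f (Suc i))) \<and> snd (f (Suc i)) = snd (f i)" if "i \<in> I" for i
    using that Ieq by blast
  have rtI: "f (Suc i) = (fst (f i), Suc (snd (f i)))" if "i \<notin> I" "i \<in> {1..<m}" for i
    using that Ieq steps by blast
  have Ism: "I \<subseteq> {1..<m}" using Ieq by blast
  have step1: "fst (f (Suc i)) \<le> fst (f i) \<and> snd (f i) \<le> snd (f (Suc i))" if "i \<in> {1..<m}" for i
  proof (cases "i \<in> I")
    case True then show ?thesis using upI[of i] by simp
  next
    case False then show ?thesis using rtI[of i] that by simp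
  qed
  have mono: "fst (f b) \<le> fst (f a) \<and> snd (f a) \<le> snd (f b)" if "1 \<le> a" "a \<le> b" "b \<le> m" for a b
    using that(2,3)
  proof (induction b rule: dec_induct)
    case base then show ?case by simp
  next
    case (step b)
    then have "b \<in> {1..<m}" using that(1) by simp
    then show ?case using step step1[of b] by simp
  qed
  have OD: "outer_cells L \<subseteq> diagram L" using outer_char[OF P] by blast
  have fD: "f k \<in> diagram L" if "k \<in> {1..m}" for k using that Of OD by blast
  have "f 1 \<in> diagram L" using fD m1 by simp
  then have "1 \<le> part L (fst (f 1))" "1 \<le> fst (f 1)" using diag_mem[OF P, of "fst (f 1)" "snd (f 1)"] by auto
  moreover have "\<not> length L < fst (f 1)" using part_zero[OF P, of "fst (f 1)"] calculation by auto
  ultimately have len: "1 \<le> length L" by linarith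
  define L1 where "L1 = part L 1"
  have L1pos: "1 \<le> L1" unfolding L1_def using part_pos[OF P] len by simp
  have eq2: "part L (Suc (Suc 0)) = part L 2" by (simp add: numeral_2_eq_2)
  have "(1, L1) \<in> outer_cells L"
    unfolding outer_char[OF P] using L1pos eq eq2 by (simp add: diag_mem[OF P] L1_def)
  then obtain k1 where k1: "k1 \<in> {1..m}" "f k1 = (1, L1)" using Of by auto
  have fm1: "fst (f m) = 1"
  proof -
    have "fst (f m) \<le> fst (f k1)" using mono[of k1 m] k1 by simp
    moreover have "1 \<le> fst (f m)" using fD[of m] m1 diag_mem[OF P, of "fst (f m)" "snd (f m)"] by simp
    ultimately show ?thesis using k1 by simp
  qed
  have "(length L, 1) \<in> outer_cells L"
    unfolding outer_char[OF P] using len part_pos[OF P, of "length L"] part_zero[OF P, of "Suc (length L)"]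
    by (simp add: diag_mem[OF P])
  then obtain k0 where k0: "k0 \<in> {1..m}" "f k0 = (length L, 1)" using Of by auto
  have sf1: "snd (f 1) = 1"
  proof -
    have "snd (f 1) \<le> snd (f k0)" using mono[of 1 k0] k0 by simp
    moreover have "1 \<le> snd (f 1)" using fD[of 1] m1 diag_mem[OF P, of "fst (f 1)" "snd (f 1)"] by simp
    ultimately show ?thesis using k0 by simp
  qed
  have "(2, L1) \<in> outer_cells L"
    unfolding outer_char[OF P] using L1pos eq part_anti[OF P, of 2 3] by (simp add: diag_mem[OF P] L1_def)
  then obtain k2 where k2: "k2 \<in> {1..m}" "f k2 = (2, L1)" using Of by auto
  have "k2 \<noteq> m" using k2 fm1 by auto
  then have k2m: "k2 \<le> m - 1" "2 \<le> m" using k2 by auto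
  have mI: "m - 1 \<in> I"
  proof (rule ccontr)
    assume "m - 1 \<notin> I"
    moreover have "m - 1 \<in> {1..<m}" using k2m by simp
    ultimately have "f (Suc (m - 1)) = (fst (f (m-1)), Suc (snd (f (m-1))))" using rtI[of "m-1"] by blast
    moreover have "Suc (m - 1) = m" using k2m by simp
    ultimately have "f m = (fst (f (m-1)), Suc (snd (f (m-1))))" by simp
    moreover have "L1 \<le> snd (f (m-1))" using mono[of k2 "m-1"] k2 k2m by simp
    moreover have "snd (f m) \<le> L1"
    proof -
      have "(1, snd (f m)) \<in> diagram L" using fD[of m] m1 fm1 by (cases "f m") simp
      then show ?thesis unfolding L1_def using diag_mem[OF P] by simp
    qed
    ultimately show False by simp
  qed
  have mn: "m = n"
  proof -
    have "Max I \<le> m - 1" using Ism finI neI by auto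
    moreover have "m - 1 \<le> Max I" using mI finI by simp
    ultimately show ?thesis unfolding n_def using k2m by simp
  qed
  have colf: "snd (f k) = Cc k" if "1 \<le> k" "k \<le> m" for k
    using that
  proof (induction k rule: nat_induct_at_least)
    case base then show ?case using sf1 Cc_1 by simp
  next
    case (Suc k)
    then have kin: "k \<in> {1..<m}" by simp
    have "Cc (Suc k) = Cc k + (if k \<in> I then 0 else 1)" unfolding Cc_def using stepC[of k] Suc by simp
    show ?case
    proof (cases "k \<in> I")
      case True
      then show ?thesis using Suc.IH Suc.prems upI[OF True] \<open>Cc (Suc k) = _\<close> by simp
    next
      case False
      then show ?thesis using Suc.IH Suc.prems rtI[OF False kin] \<open>Cc (Suc k) = _\<close> by simp
    qed
  qed
  have rowf: "fst (f (m - d)) = R (m - d)" if "d < m" for d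
    using that
  proof (induction d)
    case 0 then show ?case using fm1 R_n mn by simp
  next
    case (Suc d)
    define k where "k = m - Suc d"
    have kin: "k \<in> {1..<m}" "Suc k = m - d" using Suc unfolding k_def by auto
    have IH: "fst (f (Suc k)) = R (Suc k)" using Suc kin by simp
    have "R k = R (Suc k) + (if k \<in> I then 1 else 0)" unfolding R_def using stepR[of k] kin mn by simp
    have "fst (f k) = R k"
    proof (cases "k \<in> I")
      case True
      then show ?thesis using IH upI[OF True] \<open>R k = _\<close> by simp
    next
      case False
      then show ?thesis using IH rtI[OF False kin(1)] \<open>R k = _\<close> by simp
    qed
    then show ?case unfolding k_def .
  qed
  have fF: "f k = F k" if "k \<in> {1..m}" for k
  proof -
    have "fst (f (m - (m - k))) = R (m - (m - k))" using rowf[of "m - k"] that by simp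
    then have "fst (f k) = R k" using that by simp
    then show ?thesis using colf[of k] that unfolding F_def by (simp add: prod_eq_iff)
  qed
  have "f ` {1..m} = F ` {1..m}" by (rule image_cong[OF refl fF])
  then have "outer_cells L = F ` {1..n}" using Of mn by simp
  then show ?thesis using diag_from_outer[OF P] unfolding DD_def by simp
qed

lemma lamI_props:
  "is_partition (lamI I) \<and> part (lamI I) 1 = part (lamI I) 2 \<and> ribbon_corr (outer_cells (lamI I)) I"
proof -
  have "\<exists>!lam. is_partition lam \<and> part lam 1 = part lam 2 \<and> ribbon_corr (outer_cells lam) I"
  proof (rule ex_ex1I)
    show "\<exists>lam. is_partition lam \<and> part lam 1 = part lam 2 \<and> ribbon_corr (outer_cells lam) I"
      by (rule exists_lam)
  next
    fix a b
    assume "is_partition a \<and> part a 1 = part a 2 \<and> ribbon_corr (outer_cells a) I"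
      "is_partition b \<and> part b 1 = part b 2 \<and> ribbon_corr (outer_cells b) I"
    then have pa: "is_partition a" "part a 1 = part a 2" "ribbon_corr (outer_cells a) I"
      and pb: "is_partition b" "part b 1 = part b 2" "ribbon_corr (outer_cells b) I" by simp_all
    have "diagram a = DD" by (rule unique_lam[OF pa])
    moreover have "diagram b = DD" by (rule unique_lam[OF pb])
    ultimately show "a = b" using diagram_inj[OF pa(1) pb(1)] by simp
  qed
  then show ?thesis unfolding lamI_def by (rule theI')
qed

lemma muI_props:
  "is_partition (muI I) \<and> diagram (muI I) = inner (lamI I)"
proof -
  have P: "is_partition (lamI I)" using lamI_props by blast
  have "\<exists>!mu. is_partition mu \<and> diagram mu = diagram (lamI I) - outer_cells (lamI I)"
  proof (rule ex_ex1I)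
    show "\<exists>mu. is_partition mu \<and> diagram mu = diagram (lamI I) - outer_cells (lamI I)"
    proof -
      obtain mu where "is_partition mu" "diagram mu = inner (lamI I)"
        using shape_partition[OF inner_shape[OF P]] by blast
      then show ?thesis using inner_eq[OF P] by metis
    qed
  next
    fix a b
    assume "is_partition a \<and> diagram a = diagram (lamI I) - outer_cells (lamI I)"
      "is_partition b \<and> diagram b = diagram (lamI I) - outer_cells (lamI I)"
    then show "a = b" using diagram_inj[of a b] by simp
  qed
  then have "is_partition (muI I) \<and> diagram (muI I) = diagram (lamI I) - outer_cells (lamI I)"
    unfolding muI_def by (rule theI')
  then show ?thesis using inner_eq[OF P] by simp
qed

end


definition dcl :: "cell set \<Rightarrow> bool" where
  "dcl nu \<longleftrightarrow> (\<forall>c\<in>nu. \<forall>i' j'. 1 \<le> i' \<longrightarrow> i' \<le> fst c \<longrightarrow> 1 \<le> j' \<longrightarrow> j' \<le> snd c \<longrightarrow> (i',j') \<in> nu)"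

lemma dclD: "dcl nu \<Longrightarrow> (i,j) \<in> nu \<Longrightarrow> 1 \<le> i' \<Longrightarrow> i' \<le> i \<Longrightarrow> 1 \<le> j' \<Longrightarrow> j' \<le> j \<Longrightarrow> (i',j') \<in> nu"
  unfolding dcl_def by fastforce

lemma dclI: "(\<And>i j i' j'. (i,j) \<in> nu \<Longrightarrow> 1 \<le> i' \<Longrightarrow> i' \<le> i \<Longrightarrow> 1 \<le> j' \<Longrightarrow> j' \<le> j \<Longrightarrow> (i',j') \<in> nu) \<Longrightarrow> dcl nu"
  unfolding dcl_def by fastforce

definition CL :: "nat list \<Rightarrow> cell set set" where
  "CL L = {nu. nu \<subseteq> inner L \<and> dcl nu}"

definition E :: "nat list \<Rightarrow> cell set \<Rightarrow> cell set" where
  "E L nu = nu \<union> sh ` (inner L - nu)"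

lemma inner_mem: "(i,j) \<in> inner L \<longleftrightarrow> 1 \<le> i \<and> 1 \<le> j \<and> (Suc i, Suc j) \<in> diagram L"
  unfolding inner_def by simp

lemma sh_eq: "(a, b) = sh c \<longleftrightarrow> (\<exists>i j. c = (i,j) \<and> a = Suc i \<and> b = Suc j)"
  by (cases c) auto

context
  fixes L :: "nat list"
  assumes P: "is_partition L"
begin

lemma inner_dcl: "dcl (inner L)"
  using shapeD(4)[OF inner_shape[OF P]] by (intro dclI) blast

lemma inner_fin: "finite (inner L)"
  using shapeD(1)[OF inner_shape[OF P]] .

lemma E_sh_notin:
  assumes nu: "nu \<in> CL L" and "(i,j) \<in> nu"
  shows "(i,j) \<notin> sh ` (inner L - nu)"
proof
  assume "(i,j) \<in> sh ` (inner L - nu)"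
  then obtain a b where ab: "(a,b) \<in> inner L" "(a,b) \<notin> nu" "i = Suc a" "j = Suc b" by force
  have "1 \<le> a" "1 \<le> b" using ab inner_mem by auto
  then have "(a,b) \<in> nu" using dclD[of nu i j a b] nu assms(2) ab unfolding CL_def by simp
  then show False using ab by simp
qed

lemma exc_sub:
  assumes D: "D \<in> excited L mu" and mu: "diagram mu = inner L"
  shows "\<exists>nu\<in>CL L. D = E L nu"
  using D
proof (induction rule: excited.induct)
  case base
  have "inner L \<in> CL L" unfolding CL_def using inner_dcl by simp
  moreover have "E L (inner L) = inner L" unfolding E_def by simp
  ultimately show ?case using mu by metis
next
  case (move D i j)
  from move.IH obtain nu where nu: "nu \<in> CL L" and DE: "D = E L nu" by blast
  have nuM: "nu \<subseteq> inner L" and dnu: "dcl nu" using nu unfolding CL_def by auto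
  show ?case
  proof (cases "(i,j) \<in> nu")
    case True
    define nu' where "nu' = nu - {(i,j)}"
    have ij1: "1 \<le> i" "1 \<le> j" using True nuM inner_mem by auto
    have "dcl nu'"
    proof (rule dclI)
      fix a b a' b' assume h: "(a,b) \<in> nu'" "1 \<le> a'" "a' \<le> a" "1 \<le> b'" "b' \<le> b"
      have ab: "(a,b) \<in> nu" "(a,b) \<noteq> (i,j)" using h nu'_def by auto
      have in1: "(a',b') \<in> nu" using dclD[OF dnu ab(1) h(2-5)] .
      have "(a',b') \<noteq> (i,j)"
      proof
        assume e: "(a',b') = (i,j)"
        show False
        proof (cases "i < a")
          case True
          then have "(Suc i, j) \<in> nu" using dclD[OF dnu ab(1), of "Suc i" j] e h by auto
          then show False using move.hyps DE unfolding E_def by auto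
        next
          case False
          then have "a = i" using e h by auto
          then have "j < b" using ab e h by auto
          then have "(i, Suc j) \<in> nu" using dclD[OF dnu ab(1), of i "Suc j"] e h \<open>a = i\<close> by auto
          then show False using move.hyps DE unfolding E_def by auto
        qed
      qed
      then show "(a',b') \<in> nu'" using in1 nu'_def by simp
    qed
    then have nu'CL: "nu' \<in> CL L" using nuM unfolding CL_def nu'_def by auto
    have Mnu': "inner L - nu' = insert (i,j) (inner L - nu)" using True nuM unfolding nu'_def by auto
    have "insert (Suc i, Suc j) (D - {(i,j)}) = E L nu'"
    proof -
      have "(i,j) \<notin> sh ` (inner L - nu)" using E_sh_notin[OF nu True] .
      then have "D - {(i,j)} = nu' \<union> sh ` (inner L - nu)" unfolding DE E_def nu'_def by auto
      then show ?thesis unfolding E_def Mnu' by auto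
    qed
    then show ?thesis using nu'CL by blast
  next
    case False
    then have "(i,j) \<in> sh ` (inner L - nu)" using move.hyps(2) DE unfolding E_def by auto
    then obtain a b where ab: "(a,b) \<in> inner L" "i = Suc a" "j = Suc b" by force
    then have "1 \<le> i" "1 \<le> j" by auto
    then have "(i,j) \<in> inner L" using move.hyps(3) inner_mem by simp
    moreover have "sh (i,j) \<in> sh ` (inner L - nu)" using False calculation by blast
    ultimately have "(Suc i, Suc j) \<in> D" using DE unfolding E_def by auto
    then show ?thesis using move.hyps(6) by simp
  qed
qed

lemma exc_sup:
  assumes mu: "diagram mu = inner L"
  shows "nu \<in> CL L \<Longrightarrow> E L nu \<in> excited L mu"
proof (induction "card (inner L - nu)" arbitrary: nu rule: less_induct)
  case less
  have nuM: "nu \<subseteq> inner L" and dnu: "dcl nu" using less.prems unfolding CL_def by auto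
  show ?case
  proof (cases "nu = inner L")
    case True
    then have "E L nu = diagram mu" unfolding E_def using mu by simp
    then show ?thesis using excited.base by metis
  next
    case False
    define S where "S = inner L - nu"
    have finS: "finite S" unfolding S_def using inner_fin by simp
    have neS: "S \<noteq> {}" unfolding S_def using False nuM by auto
    define c where "c = arg_min_on (\<lambda>d. fst d + snd d) S"
    have cS: "c \<in> S" unfolding c_def by (rule arg_min_if_finite(1)[OF finS neS])
    have cmin: "fst c + snd c \<le> fst d + snd d" if "d \<in> S" for d
      unfolding c_def by (rule arg_min_least[OF finS neS that])
    obtain i j where c: "c = (i,j)" by (cases c)
    have cM: "(i,j) \<in> inner L" "(i,j) \<notin> nu" using cS c S_def by auto
    have ij1: "1 \<le> i" "1 \<le> j" using cM inner_mem by auto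
    have below: "(a,b) \<in> nu" if "1 \<le> a" "a \<le> i" "1 \<le> b" "b \<le> j" "(a,b) \<noteq> (i,j)" for a b
    proof (rule ccontr)
      assume "(a,b) \<notin> nu"
      moreover have "(a,b) \<in> inner L" using shapeD(4)[OF inner_shape[OF P] cM(1)] that by blast
      ultimately have "(a,b) \<in> S" unfolding S_def by simp
      then have "i + j \<le> a + b" using cmin c by fastforce
      then show False using that by auto
    qed
    define nu1 where "nu1 = insert (i,j) nu"
    have "dcl nu1"
    proof (rule dclI)
      fix a b a' b' assume h: "(a,b) \<in> nu1" "1 \<le> a'" "a' \<le> a" "1 \<le> b'" "b' \<le> b"
      show "(a',b') \<in> nu1"
      proof (cases "(a,b) = (i,j)")
        case True
        then show ?thesis using below[of a' b'] h unfolding nu1_def by auto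
      next
        case False
        then have "(a,b) \<in> nu" using h nu1_def by blast
        then show ?thesis using dclD[OF dnu _ h(2-5)] unfolding nu1_def by simp
      qed
    qed
    then have nu1CL: "nu1 \<in> CL L" unfolding CL_def nu1_def using nuM cM by auto
    have "inner L - nu1 \<subset> inner L - nu" unfolding nu1_def using cM by auto
    then have "card (inner L - nu1) < card (inner L - nu)" using inner_fin by (simp add: psubset_card_mono)
    then have exc1: "E L nu1 \<in> excited L mu" using less.hyps nu1CL by blast
    have M1: "inner L - nu = insert (i,j) (inner L - nu1)" unfolding nu1_def using cM by auto
    have shs: "(a,b) \<in> sh ` (inner L - nu1) \<longleftrightarrow> (\<exists>a0 b0. a = Suc a0 \<and> b = Suc b0 \<and> (a0,b0) \<in> inner L \<and> (a0,b0) \<notin> nu1)" for a b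
      by (auto simp: sh_eq image_iff)
    have n1: "(i, Suc j) \<notin> E L nu1"
    proof
      assume "(i, Suc j) \<in> E L nu1"
      then consider "(i, Suc j) \<in> nu" | "(i, Suc j) \<in> sh ` (inner L - nu1)" unfolding E_def nu1_def by auto
      then show False
      proof cases
        case 1 then show False using dclD[OF dnu 1, of i j] ij1 cM by simp
      next
        case 2
        then obtain a0 where "i = Suc a0" "(a0, j) \<in> inner L" "(a0,j) \<notin> nu1" using shs by blast
        moreover have "(a0, j) \<in> nu" using below[of a0 j] calculation ij1 inner_mem by auto
        ultimately show False unfolding nu1_def by simp
      qed
    qed
    have n2: "(Suc i, j) \<notin> E L nu1"
    proof
      assume "(Suc i, j) \<in> E L nu1"
      then consider "(Suc i, j) \<in> nu" | "(Suc i, j) \<in> sh ` (inner L - nu1)" unfolding E_def nu1_def by auto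
      then show False
      proof cases
        case 1 then show False using dclD[OF dnu 1, of i j] ij1 cM by simp
      next
        case 2
        then obtain b0 where "j = Suc b0" "(i, b0) \<in> inner L" "(i,b0) \<notin> nu1" using shs by blast
        moreover have "(i, b0) \<in> nu" using below[of i b0] calculation ij1 inner_mem by auto
        ultimately show False unfolding nu1_def by simp
      qed
    qed
    have n3: "(Suc i, Suc j) \<notin> E L nu1"
    proof
      assume "(Suc i, Suc j) \<in> E L nu1"
      then consider "(Suc i, Suc j) \<in> nu" | "(Suc i, Suc j) \<in> sh ` (inner L - nu1)" unfolding E_def nu1_def by auto
      then show False
      proof cases
        case 1 then show False using dclD[OF dnu 1, of i j] ij1 cM by simp
      next
        case 2
        then show False using shs[of "Suc i" "Suc j"] unfolding nu1_def by auto
      qed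
    qed
    have ijE: "(i,j) \<in> E L nu1" unfolding E_def nu1_def by simp
    have shM: "(Suc i, Suc j) \<in> diagram L" using cM inner_mem by simp
    have "insert (Suc i, Suc j) (E L nu1 - {(i,j)}) \<in> excited L mu"
      by (rule excited.move[OF exc1 ijE shM n1 n2 n3])
    moreover have "insert (Suc i, Suc j) (E L nu1 - {(i,j)}) = E L nu"
    proof -
      have "(i,j) \<notin> sh ` (inner L - nu1)"
      proof
        assume "(i,j) \<in> sh ` (inner L - nu1)"
        then obtain a0 b0 where "i = Suc a0" "j = Suc b0" "(a0,b0) \<in> inner L" "(a0,b0) \<notin> nu1" using shs by blast
        moreover have "(a0,b0) \<in> nu" using below[of a0 b0] calculation inner_mem by auto
        ultimately show False unfolding nu1_def by simp
      qed
      then have "E L nu1 - {(i,j)} = nu \<union> sh ` (inner L - nu1)" unfolding E_def nu1_def using cM by auto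
      then show ?thesis unfolding E_def M1 by auto
    qed
    ultimately show ?thesis by simp
  qed
qed

lemma excited_eq:
  assumes mu: "diagram mu = inner L"
  shows "excited L mu = E L ` CL L"
  using exc_sub[OF _ mu] exc_sup[OF mu] by blast

lemma E_inj: "inj_on (E L) (CL L)"
proof (rule inj_onI)
  have sub: "nu1 \<subseteq> nu2" if nu1: "nu1 \<in> CL L" and nu2: "nu2 \<in> CL L" and eq: "E L nu1 = E L nu2" for nu1 nu2
  proof -
    have d1: "dcl nu1" using nu1 unfolding CL_def by simp
    have "\<forall>j. (i,j) \<in> nu1 \<longrightarrow> (i,j) \<in> nu2" for i
    proof (induction i rule: less_induct)
      case (less i)
      show ?case
      proof (intro allI impI)
        fix j assume ij: "(i,j) \<in> nu1"
        show "(i,j) \<in> nu2"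
        proof (rule ccontr)
          assume nin: "(i,j) \<notin> nu2"
          have "(i,j) \<in> E L nu2" using eq ij unfolding E_def by auto
          then have "(i,j) \<in> sh ` (inner L - nu2)" using nin unfolding E_def by auto
          then obtain a b where ab: "i = Suc a" "j = Suc b" "(a,b) \<in> inner L" "(a,b) \<notin> nu2"
            by (auto simp: sh_eq image_iff)
          have "1 \<le> a" "1 \<le> b" using ab inner_mem by auto
          then have "(a,b) \<in> nu1" using dclD[OF d1 ij] ab by simp
          then have "(a,b) \<in> nu2" using less.IH[of a] ab by simp
          then show False using ab by simp
        qed
      qed
    qed
    then show ?thesis by auto
  qed
  fix nu1 nu2 assume "nu1 \<in> CL L" "nu2 \<in> CL L" "E L nu1 = E L nu2"
  then show "nu1 = nu2" using sub by (metis subset_antisym)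
qed

lemma CL_fin: "finite (CL L)"
proof -
  have "CL L \<subseteq> Pow (inner L)" unfolding CL_def by auto
  then show ?thesis using inner_fin by (metis finite_Pow_iff finite_subset)
qed

lemma E_row1: "nu \<in> CL L \<Longrightarrow> {c \<in> E L nu. fst c = 1} = {c \<in> nu. fst c = 1}"
  unfolding E_def by (auto simp: inner_mem)

lemma E_rest: "nu \<in> CL L \<Longrightarrow> {c \<in> E L nu. fst c \<noteq> 1} = {c \<in> nu. fst c \<noteq> 1} \<union> sh ` (inner L - nu)"
  unfolding E_def by (auto simp: inner_mem)

lemma E_sub_diag: "nu \<in> CL L \<Longrightarrow> E L nu \<subseteq> diagram L"
proof
  fix c assume nu: "nu \<in> CL L" and "c \<in> E L nu"
  then consider "c \<in> nu" | "c \<in> sh ` (inner L - nu)" unfolding E_def by auto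
  then show "c \<in> diagram L"
  proof cases
    case 1
    then have "c \<in> inner L" using nu unfolding CL_def by auto
    then show ?thesis using diag_closed[OF P, of "Suc (fst c)" "Suc (snd c)" "fst c" "snd c"]
      by (cases c) (auto simp: inner_mem)
  next
    case 2 then show ?thesis by (auto simp: inner_mem)
  qed
qed

end


definition r1 :: "cell set \<Rightarrow> nat set" where "r1 nu = {c. (1,c) \<in> nu}"
definition row1len :: "cell set \<Rightarrow> nat" where "row1len nu = card {c \<in> nu. fst c = 1}"

definition g1 :: "nat list \<Rightarrow> nat \<Rightarrow> nat" where
  "g1 L m = (\<Sum>nu \<in> {nu \<in> CL L. row1len nu = m}. \<Prod>c \<in> {c \<in> E L nu. fst c \<noteq> 1}. hook L c)"
definition g :: "nat list \<Rightarrow> nat \<Rightarrow> nat" where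
  "g L m = (\<Sum>nu \<in> {nu \<in> CL L. row1len nu = m}. \<Prod>c \<in> E L nu. hook L c)"
definition Bp :: "nat list \<Rightarrow> nat \<Rightarrow> nat" where
  "Bp L m = (\<Prod>c \<in> {m+2..part L 2}. hook L (2,c))"
definition Ap :: "nat list \<Rightarrow> nat \<Rightarrow> nat" where
  "Ap L m = (\<Prod>c \<in> {1..m}. hook L (1,c))"

definition upc :: "cell \<Rightarrow> cell" where "upc c = (Suc (fst c), snd c)"
lemma upc_simp[simp]: "upc (i,j) = (Suc i, j)" unfolding upc_def by simp
lemma upc_inj: "inj upc" unfolding inj_def upc_def by (auto simp: prod_eq_iff)
lemma sh_upc: "sh (upc c) = upc (sh c)" by (cases c) simp
lemma upc_mem[simp]: "(Suc a, b) \<in> upc ` X \<longleftrightarrow> (a,b) \<in> X"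
  using inj_image_mem_iff[OF upc_inj, of "(a,b)" X] by simp
lemma upc_mem0[simp]: "(0, b) \<notin> upc ` X"
  unfolding upc_def by auto

definition down :: "cell set \<Rightarrow> cell set" where "down nu = {(i,j). 1 \<le> i \<and> (Suc i, j) \<in> nu}"
definition up :: "nat \<Rightarrow> cell set \<Rightarrow> cell set" where
  "up m nu' = (\<lambda>c. (1,c)) ` {1..m} \<union> upc ` nu'"

lemma row1len_r1: "row1len nu = card (r1 nu)"
proof -
  have "{c \<in> nu. fst c = 1} = (\<lambda>c. (1,c)) ` r1 nu" unfolding r1_def by force
  moreover have "inj (\<lambda>c::nat. (1::nat,c))" by (simp add: inj_def)
  ultimately show ?thesis unfolding row1len_def by (simp add: card_image inj_on_def)
qed

context
  fixes L :: "nat list"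
  assumes P: "is_partition L"
begin

lemma CL_r1:
  assumes nu: "nu \<in> CL L"
  shows "r1 nu = {1..row1len nu}"
proof -
  have fin: "finite (r1 nu)"
  proof (rule finite_subset)
    show "r1 nu \<subseteq> snd ` inner L" using nu unfolding r1_def CL_def by force
  qed (use inner_fin[OF P] in simp)
  have d: "dcl nu" and sub: "nu \<subseteq> inner L" using nu unfolding CL_def by auto
  show ?thesis unfolding row1len_r1
  proof (rule init_seg[OF fin])
    show "\<forall>x\<in>r1 nu. 1 \<le> x" using sub unfolding r1_def by (auto simp: inner_mem)
    show "\<forall>x\<in>r1 nu. \<forall>y. 1 \<le> y \<longrightarrow> y \<le> x \<longrightarrow> y \<in> r1 nu"
      unfolding r1_def using dclD[OF d] by auto
  qed
qed

lemma CL_row1_mem: "nu \<in> CL L \<Longrightarrow> (1,c) \<in> nu \<longleftrightarrow> 1 \<le> c \<and> c \<le> row1len nu"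
  using CL_r1 unfolding r1_def by (metis atLeastAtMost_iff mem_Collect_eq)

lemma CL_row1_set: "nu \<in> CL L \<Longrightarrow> {c \<in> nu. fst c = 1} = (\<lambda>c. (1,c)) ` {1..row1len nu}"
proof -
  assume nu: "nu \<in> CL L"
  show ?thesis
  proof (rule set_eqI)
    fix d :: cell
    obtain a b where d: "d = (a,b)" by (cases d)
    show "d \<in> {c \<in> nu. fst c = 1} \<longleftrightarrow> d \<in> (\<lambda>c. (1,c)) ` {1..row1len nu}"
      unfolding d using CL_row1_mem[OF nu, of b] by auto
  qed
qed

lemma g_Ap: "g L m = Ap L m * g1 L m"
proof -
  have "(\<Prod>c \<in> E L nu. hook L c) = Ap L m * (\<Prod>c \<in> {c \<in> E L nu. fst c \<noteq> 1}. hook L c)"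
    if nu: "nu \<in> CL L" "row1len nu = m" for nu
  proof -
    have finE: "finite (E L nu)" using E_sub_diag[OF P nu(1)] diag_finite[OF P] by (rule finite_subset)
    have split: "E L nu = {c \<in> E L nu. fst c = 1} \<union> {c \<in> E L nu. fst c \<noteq> 1}" by auto
    have "(\<Prod>c \<in> E L nu. hook L c) = (\<Prod>c \<in> {c \<in> E L nu. fst c = 1}. hook L c) * (\<Prod>c \<in> {c \<in> E L nu. fst c \<noteq> 1}. hook L c)"
      by (subst split, rule prod.union_disjoint) (use finE in auto)
    moreover have "(\<Prod>c \<in> {c \<in> E L nu. fst c = 1}. hook L c) = Ap L m"
    proof -
      have "{c \<in> E L nu. fst c = 1} = (\<lambda>c. (1,c)) ` {1..m}" using E_row1[OF P nu(1)] CL_row1_set[OF nu(1)] nu(2) by simp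
      moreover have "inj_on (\<lambda>c::nat. (1::nat,c)) {1..m}" by (simp add: inj_on_def)
      ultimately show ?thesis unfolding Ap_def by (simp add: prod.reindex)
    qed
    ultimately show ?thesis by simp
  qed
  then show ?thesis unfolding g_def g1_def by (simp add: sum_distrib_left)
qed

lemma row1len_bound: "nu \<in> CL L \<Longrightarrow> row1len nu \<le> part L 2 - 1"
proof -
  assume nu: "nu \<in> CL L"
  show ?thesis
  proof (cases "row1len nu = 0")
    case False
    then have "(1, row1len nu) \<in> nu" using CL_row1_mem[OF nu] by simp
    then have "(1, row1len nu) \<in> inner L" using nu unfolding CL_def by auto
    then have "(2, Suc (row1len nu)) \<in> diagram L" by (simp add: inner_mem numeral_2_eq_2)
    then show ?thesis using diag_mem[OF P] by simp
  qed simp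
qed

lemma g_zero: "1 \<le> m \<Longrightarrow> part L 2 \<le> m \<Longrightarrow> g L m = 0"
proof -
  assume m: "1 \<le> m" "part L 2 \<le> m"
  have e: "{nu \<in> CL L. row1len nu = m} = {}" using row1len_bound m by fastforce
  show ?thesis unfolding g_def e by simp
qed

lemma inner_tl: "(i,j) \<in> inner (tl L) \<longleftrightarrow> 1 \<le> i \<and> (Suc i, j) \<in> inner L"
  by (auto simp: inner_mem diag_tl)

end

context
  fixes L :: "nat list"
  assumes P: "is_partition L"
begin

lemma down_CL:
  assumes nu: "nu \<in> CL L"
  shows "down nu \<in> CL (tl L)" "row1len (down nu) \<le> row1len nu"
proof -
  have d: "dcl nu" and sub: "nu \<subseteq> inner L" using nu unfolding CL_def by auto
  have "down nu \<subseteq> inner (tl L)" using sub unfolding down_def by (auto simp: inner_tl[OF P])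
  moreover have "dcl (down nu)"
  proof (rule dclI)
    fix i j i' j' assume h: "(i,j) \<in> down nu" "1 \<le> i'" "i' \<le> i" "1 \<le> j'" "j' \<le> j"
    then have "(Suc i, j) \<in> nu" unfolding down_def by simp
    then have "(Suc i', j') \<in> nu" by (rule dclD[OF d]) (use h in auto)
    then show "(i',j') \<in> down nu" unfolding down_def using h by simp
  qed
  ultimately show dn: "down nu \<in> CL (tl L)" unfolding CL_def by simp
  have "r1 (down nu) \<subseteq> r1 nu"
  proof
    fix c assume "c \<in> r1 (down nu)"
    then have "(2, c) \<in> nu" unfolding r1_def down_def by (simp add: numeral_2_eq_2)
    moreover have "1 \<le> c" using \<open>c \<in> r1 (down nu)\<close> CL_r1[OF tl_partition[OF P] dn] by simp
    ultimately have "(1,c) \<in> nu" using dclD[OF d, of 2 c 1 c] by simp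
    then show "c \<in> r1 nu" unfolding r1_def by simp
  qed
  then show "row1len (down nu) \<le> row1len nu" using CL_r1[OF P nu] unfolding row1len_r1
    by (metis card_mono finite_atLeastAtMost)
qed

lemma up_down:
  assumes nu: "nu \<in> CL L" shows "up (row1len nu) (down nu) = nu"
proof (rule set_eqI)
  fix d :: cell
  obtain a b where d: "d = (a,b)" by (cases d)
  have pos: "1 \<le> a" if "(a,b) \<in> nu" using that nu unfolding CL_def by (auto simp: inner_mem)
  show "d \<in> up (row1len nu) (down nu) \<longleftrightarrow> d \<in> nu"
  proof (cases "a = 1")
    case True
    then show ?thesis unfolding d up_def down_def using CL_row1_mem[OF P nu, of b] by auto
  next
    case False
    show ?thesis
    proof
      assume "d \<in> up (row1len nu) (down nu)"
      then show "d \<in> nu" unfolding d up_def down_def using False by auto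
    next
      assume "d \<in> nu"
      then have "a \<ge> 2" using pos False d by fastforce
      then obtain a0 where "a = Suc a0" "1 \<le> a0" by (cases a) auto
      then have "(a0, b) \<in> down nu" unfolding down_def using \<open>d \<in> nu\<close> d by simp
      then show "d \<in> up (row1len nu) (down nu)" unfolding d up_def using \<open>a = Suc a0\<close> by simp
    qed
  qed
qed

lemma up_CL:
  assumes nu': "nu' \<in> CL (tl L)" and m: "row1len nu' \<le> m" "m < part L 2"
  shows "up m nu' \<in> CL L" "row1len (up m nu') = m" "down (up m nu') = nu'"
proof -
  have d: "dcl nu'" and sub: "nu' \<subseteq> inner (tl L)" using nu' unfolding CL_def by auto
  have pos: "1 \<le> i" if "(i,j) \<in> nu'" for i j using that sub by (auto simp: inner_mem)
  have "up m nu' \<subseteq> inner L"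
  proof
    fix c assume "c \<in> up m nu'"
    then consider (a) k where "c = (1,k)" "1 \<le> k" "k \<le> m" | (b) i j where "c = (Suc i, j)" "(i,j) \<in> nu'"
      unfolding up_def by auto
    then show "c \<in> inner L"
    proof cases
      case a
      then have "(2, Suc k) \<in> diagram L" using m by (simp add: diag_mem[OF P])
      then show ?thesis using a by (simp add: inner_mem numeral_2_eq_2)
    next
      case b
      then show ?thesis using sub inner_tl[OF P] by auto
    qed
  qed
  moreover have "dcl (up m nu')"
  proof (rule dclI)
    fix i j i' j' assume h: "(i,j) \<in> up m nu'" "1 \<le> i'" "i' \<le> i" "1 \<le> j'" "j' \<le> j"
    consider (a) "i = 1" "j \<le> m" | (b) i0 where "i = Suc i0" "(i0,j) \<in> nu'"
      using h(1) unfolding up_def by auto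
    then show "(i',j') \<in> up m nu'"
    proof cases
      case a then show ?thesis using h unfolding up_def by auto
    next
      case b
      show ?thesis
      proof (cases "i' = 1")
        case True
        have "1 \<le> i0" using pos b by simp
        then have "(1, j) \<in> nu'" using dclD[OF d b(2), of 1 j] h by simp
        then have "j \<le> row1len nu'" using CL_row1_mem[OF tl_partition[OF P] nu'] by simp
        then show ?thesis using True h m unfolding up_def by auto
      next
        case False
        then obtain i1 where "i' = Suc i1" "1 \<le> i1" using h(2) by (cases i') auto
        then have "(i1, j') \<in> nu'" using dclD[OF d b(2)] h b by simp
        then have "upc (i1, j') \<in> upc ` nu'" by (rule imageI)
        then show ?thesis unfolding up_def using \<open>i' = Suc i1\<close> by simp
      qed
    qed
  qed
  ultimately show upCL: "up m nu' \<in> CL L" unfolding CL_def by simp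
  have z: "\<forall>x. (0,x) \<notin> nu'" using pos by fastforce
  have "r1 (up m nu') = {1..m}" unfolding r1_def up_def using z by (auto simp: image_iff)
  then show "row1len (up m nu') = m" unfolding row1len_r1 by simp
  show "down (up m nu') = nu'"
  proof (rule set_eqI)
    fix x :: cell
    obtain a b where x: "x = (a,b)" by (cases x)
    show "x \<in> down (up m nu') \<longleftrightarrow> x \<in> nu'"
    proof (cases "a = 0")
      case True then show ?thesis unfolding x down_def using pos[of a b] by auto
    next
      case False
      then have "(Suc a, b) \<in> up m nu' \<longleftrightarrow> (a,b) \<in> nu'" unfolding up_def by auto
      then show ?thesis unfolding x down_def using pos[of a b] False by auto
    qed
  qed
qed

lemma E_rest_split:
  assumes nu: "nu \<in> CL L" and m: "row1len nu = m"
  shows "{c \<in> E L nu. fst c \<noteq> 1} = (\<lambda>c. (2,c)) ` {m+2..part L 2} \<union> upc ` E (tl L) (down nu)"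
    and "(\<lambda>c. (2,c)) ` {m+2..part L 2} \<inter> upc ` E (tl L) (down nu) = {}"
proof -
  have d: "dcl nu" and sub: "nu \<subseteq> inner L" using nu unfolding CL_def by auto
  have dn: "down nu \<in> CL (tl L)" using down_CL[OF nu] by simp
  show "{c \<in> E L nu. fst c \<noteq> 1} = (\<lambda>c. (2,c)) ` {m+2..part L 2} \<union> upc ` E (tl L) (down nu)"
  proof (rule set_eqI)
    fix x :: cell
    obtain a b where x: "x = (a,b)" by (cases x)
    show "x \<in> {c \<in> E L nu. fst c \<noteq> 1} \<longleftrightarrow> x \<in> (\<lambda>c. (2,c)) ` {m+2..part L 2} \<union> upc ` E (tl L) (down nu)"
    proof (cases "a \<le> 1")
      case True
      have "x \<in> E L nu \<Longrightarrow> a = 1" using True x E_sub_diag[OF P nu] diag_mem[OF P] by fastforce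
      moreover have "x \<notin> upc ` E (tl L) (down nu)" using True x dn E_sub_diag[OF tl_partition[OF P] dn]
        by (auto simp: diag_mem[OF tl_partition[OF P]])
      moreover have "x \<notin> (\<lambda>c. (2,c)) ` {m+2..part L 2}" using True x by auto
      ultimately show ?thesis using True x by auto
    next
      case False
      then obtain a0 where a0: "a = Suc a0" "1 \<le> a0" by (cases a) auto
      have "x \<in> E L nu \<longleftrightarrow> (a0 = 1 \<and> m + 2 \<le> b \<and> b \<le> part L 2) \<or> (a0, b) \<in> E (tl L) (down nu)"
      proof -
        have A: "(Suc a0, b) \<in> nu \<longleftrightarrow> (a0, b) \<in> down nu" unfolding down_def using a0 by simp
        have B: "(Suc a0, b) \<in> sh ` (inner L - nu) \<longleftrightarrow>
              (a0 = 1 \<and> m + 2 \<le> b \<and> b \<le> part L 2) \<or> (a0,b) \<in> sh ` (inner (tl L) - down nu)"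
        proof
          assume "(Suc a0, b) \<in> sh ` (inner L - nu)"
          then obtain b0 where b0: "b = Suc b0" "(a0, b0) \<in> inner L" "(a0,b0) \<notin> nu" by (auto simp: sh_eq image_iff)
          show "(a0 = 1 \<and> m + 2 \<le> b \<and> b \<le> part L 2) \<or> (a0,b) \<in> sh ` (inner (tl L) - down nu)"
          proof (cases "a0 = 1")
            case True
            have "\<not> (1 \<le> b0 \<and> b0 \<le> m)" using CL_row1_mem[OF P nu, of b0] b0 True m by simp
            moreover have "1 \<le> b0" using b0 inner_mem by auto
            moreover have "(2, b) \<in> diagram L" using b0 True by (simp add: inner_mem numeral_2_eq_2)
            ultimately show ?thesis using True b0 diag_mem[OF P] by auto
          next
            case False
            then obtain a1 where a1: "a0 = Suc a1" "1 \<le> a1" using a0 by (cases a0) auto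
            have "(a1, b0) \<in> inner (tl L)" using b0 a1 inner_tl[OF P] by simp
            moreover have "(a1, b0) \<notin> down nu" using b0 a1 unfolding down_def by simp
            ultimately have "sh (a1,b0) \<in> sh ` (inner (tl L) - down nu)" by blast
            then show ?thesis using a1 b0 by simp
          qed
        next
          assume "(a0 = 1 \<and> m + 2 \<le> b \<and> b \<le> part L 2) \<or> (a0,b) \<in> sh ` (inner (tl L) - down nu)"
          then show "(Suc a0, b) \<in> sh ` (inner L - nu)"
          proof
            assume h: "a0 = 1 \<and> m + 2 \<le> b \<and> b \<le> part L 2"
            then obtain b0 where b0: "b = Suc b0" "m + 1 \<le> b0" by (cases b) auto
            have "(1, b0) \<in> inner L" using h b0 by (simp add: inner_mem diag_mem[OF P] numeral_2_eq_2)
            moreover have "(1, b0) \<notin> nu" using CL_row1_mem[OF P nu, of b0] b0 m by simp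
            ultimately have "sh (1,b0) \<in> sh ` (inner L - nu)" by blast
            then show ?thesis using h b0 by simp
          next
            assume "(a0,b) \<in> sh ` (inner (tl L) - down nu)"
            then obtain a1 b0 where ab: "a0 = Suc a1" "b = Suc b0" "(a1,b0) \<in> inner (tl L)" "(a1,b0) \<notin> down nu"
              by (auto simp: sh_eq image_iff)
            have "(Suc a1, b0) \<in> inner L" "1 \<le> a1" using ab inner_tl[OF P] by auto
            moreover have "(Suc a1, b0) \<notin> nu" using ab calculation unfolding down_def by simp
            ultimately have "sh (Suc a1, b0) \<in> sh ` (inner L - nu)" by blast
            then show ?thesis using ab by simp
          qed
        qed
        show ?thesis unfolding x E_def using A B a0 by auto
      qed
      moreover have "x \<in> upc ` E (tl L) (down nu) \<longleftrightarrow> (a0, b) \<in> E (tl L) (down nu)"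
        using x a0 by simp
      ultimately show ?thesis using x a0 by auto
    qed
  qed
  show "(\<lambda>c. (2,c)) ` {m+2..part L 2} \<inter> upc ` E (tl L) (down nu) = {}"
  proof (rule ccontr)
    assume "(\<lambda>c. (2,c)) ` {m+2..part L 2} \<inter> upc ` E (tl L) (down nu) \<noteq> {}"
    then obtain x where x1: "x \<in> (\<lambda>c. (2,c)) ` {m+2..part L 2}" and x2: "x \<in> upc ` E (tl L) (down nu)"
      by blast
    from x1 obtain c where c0: "x = (2,c)" "m + 2 \<le> c" by auto
    from x2 obtain y where y: "y \<in> E (tl L) (down nu)" "x = upc y" by blast
    have "y = (1,c)" using y(2) c0(1) by (cases y) (simp add: numeral_2_eq_2)
    then have c: "m + 2 \<le> c" "(1, c) \<in> E (tl L) (down nu)" using y c0 by auto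
    have "(1,c) \<in> {d \<in> E (tl L) (down nu). fst d = 1}" using c by simp
    then have "(1,c) \<in> {d \<in> down nu. fst d = 1}" by (simp only: E_row1[OF tl_partition[OF P] dn])
    then have "(1,c) \<in> down nu" by simp
    then have "(2,c) \<in> nu" unfolding down_def by (simp add: numeral_2_eq_2)
    then have "(1,c) \<in> nu" using dclD[OF d, of 2 c 1 c] c by simp
    then show False using CL_row1_mem[OF P nu] c m by simp
  qed
qed

lemma g1_rec:
  assumes m: "m < part L 2"
  shows "g1 L m = Bp L m * (\<Sum>m' \<le> m. g (tl L) m')"
proof -
  have Ptl: "is_partition (tl L)" using tl_partition[OF P] .
  define X where "X = {nu \<in> CL L. row1len nu = m}"
  define Y where "Y = {nu' \<in> CL (tl L). row1len nu' \<le> m}"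
  define wt where "wt nu' = (\<Prod>c \<in> E (tl L) nu'. hook (tl L) c)" for nu'
  have w: "(\<Prod>c \<in> {c \<in> E L nu. fst c \<noteq> 1}. hook L c) = Bp L m * wt (down nu)" if nu: "nu \<in> X" for nu
  proof -
    have nuCL: "nu \<in> CL L" "row1len nu = m" using nu X_def by auto
    have dn: "down nu \<in> CL (tl L)" using down_CL[OF nuCL(1)] by simp
    have finE: "finite (E (tl L) (down nu))" using E_sub_diag[OF Ptl dn] diag_finite[OF Ptl] by (rule finite_subset)
    have "(\<Prod>c \<in> {c \<in> E L nu. fst c \<noteq> 1}. hook L c)
        = (\<Prod>c \<in> (\<lambda>c. (2,c)) ` {m+2..part L 2}. hook L c) * (\<Prod>c \<in> upc ` E (tl L) (down nu). hook L c)"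
      unfolding E_rest_split(1)[OF nuCL] by (rule prod.union_disjoint) (use finE E_rest_split(2)[OF nuCL] in auto)
    moreover have "(\<Prod>c \<in> (\<lambda>c. (2,c)) ` {m+2..part L 2}. hook L c) = Bp L m"
      unfolding Bp_def by (subst prod.reindex) (auto simp: inj_on_def)
    moreover have "(\<Prod>c \<in> upc ` E (tl L) (down nu). hook L c) = wt (down nu)"
    proof -
      have "(\<Prod>c \<in> upc ` E (tl L) (down nu). hook L c) = (\<Prod>c \<in> E (tl L) (down nu). hook L (upc c))"
        using prod.reindex[OF inj_on_subset[OF upc_inj subset_UNIV], of "hook L"] by (simp add: comp_def)
      also have "\<dots> = wt (down nu)" unfolding wt_def
      proof (rule prod.cong[OF refl])
        fix c assume "c \<in> E (tl L) (down nu)"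
        then have "c \<in> diagram (tl L)" using E_sub_diag[OF Ptl dn] by blast
        then show "hook L (upc c) = hook (tl L) c" using hook_tl[OF P] by (cases c) simp
      qed
      finally show ?thesis .
    qed
    ultimately show ?thesis by simp
  qed
  have "g1 L m = (\<Sum>nu \<in> X. Bp L m * wt (down nu))" unfolding g1_def X_def[symmetric]
    using w by (rule sum.cong[OF refl])
  also have "\<dots> = Bp L m * (\<Sum>nu \<in> X. wt (down nu))" by (simp add: sum_distrib_left)
  also have "(\<Sum>nu \<in> X. wt (down nu)) = (\<Sum>nu' \<in> Y. wt nu')"
  proof (rule sum.reindex_bij_witness[of _ "up m" down])
    fix a assume "a \<in> X"
    then show "up m (down a) = a" using up_down unfolding X_def by auto
    show "down a \<in> Y" using down_CL \<open>a \<in> X\<close> unfolding X_def Y_def by auto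
    show "wt (down a) = wt (down a)" ..
  next
    fix b assume "b \<in> Y"
    then show "down (up m b) = b" "up m b \<in> X" using up_CL[of b m] m unfolding X_def Y_def by auto
  qed
  also have "(\<Sum>nu' \<in> Y. wt nu') = (\<Sum>m' \<le> m. g (tl L) m')"
  proof -
    have finY: "finite Y" unfolding Y_def using CL_fin[OF Ptl] by simp
    have "(\<Sum>m' \<le> m. (\<Sum>nu' \<in> {x \<in> Y. row1len x = m'}. wt nu')) = (\<Sum>nu' \<in> Y. wt nu')"
      by (rule sum.group[OF finY]) (auto simp: Y_def)
    moreover have "{x \<in> Y. row1len x = m'} = {nu \<in> CL (tl L). row1len nu = m'}" if "m' \<le> m" for m'
      unfolding Y_def using that by auto
    ultimately show ?thesis unfolding g_def wt_def by simp
  qed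
  finally show ?thesis .
qed

lemma g_pos: "0 < g L 0"
proof -
  have e: "{} \<in> CL L" unfolding CL_def dcl_def by simp
  have r: "row1len {} = 0" unfolding row1len_def by simp
  have fin: "finite {nu \<in> CL L. row1len nu = 0}" using CL_fin[OF P] by simp
  have "0 < (\<Prod>c \<in> E L {}. hook L c)"
    using E_sub_diag[OF P e] hook_pos[OF P] by (intro prod_pos) fastforce
  also have "\<dots> \<le> g L 0" unfolding g_def
    by (rule member_le_sum[where f = "\<lambda>nu. \<Prod>c \<in> E L nu. hook L c"]) (use e r fin in auto)
  finally show ?thesis .
qed

lemma Bp_pos: "0 < Bp L m"
  unfolding Bp_def
proof (rule prod_pos)
  fix c assume "c \<in> {m+2..part L 2}"
  then have "(2,c) \<in> diagram L" by (auto simp: diag_mem[OF P])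
  then show "0 < hook L (2,c)" using hook_pos[OF P] by fastforce
qed

end


lemma Ap_Suc: "Ap L (Suc k) = Ap L k * hook L (1, Suc k)"
  unfolding Ap_def by simp

lemma Bp_step: "k + 2 \<le> part L 2 \<Longrightarrow> Bp L k = hook L (2, k + 2) * Bp L (Suc k)"
  unfolding Bp_def by (subst prod.atLeast_Suc_atMost) simp_all

lemma g_expand: "is_partition L \<Longrightarrow> m < part L 2 \<Longrightarrow> g L m = Ap L m * (Bp L m * (\<Sum>m' \<le> m. g (tl L) m'))"
  using g_Ap g1_rec by simp

lemma conj_ge:
  assumes P: "is_partition L" and "1 \<le> j" "j \<le> part L k" "1 \<le> k"
  shows "k \<le> conj_part L j"
  using diag_mem[OF P, of k j] diag_mem_conj[OF P, of k j] assms by simp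

lemma main_ineq:
  "is_partition L \<Longrightarrow> 1 \<le> r \<Longrightarrow> r < part L 2 \<Longrightarrow>
    (conj_part L (Suc r) - 1) * (\<Sum>m<r. g L m) + part L 1 * g L 0 \<le> (part L 1 - r) * g L r"
proof (induction L arbitrary: r)
  case Nil
  then show ?case by (simp add: part_def)
next
  case (Cons x xs)
  define L where "L = x # xs"
  have P: "is_partition L" using Cons.prems L_def by simp
  have Pxs: "is_partition xs" using tl_partition[OF P] L_def by simp
  have tlL: "tl L = xs" unfolding L_def by simp
  define L1 where "L1 = part L 1"
  define L2 where "L2 = part L 2"
  have L21: "L2 \<le> L1" unfolding L1_def L2_def using part_anti[OF P, of 1 2] by simp
  have pxs1: "part xs 1 = L2" using part_tl[of 1 L] tlL unfolding L2_def by (simp add: numeral_2_eq_2)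
  have pxs2: "part xs 2 = part L 3" using part_tl[of 2 L] tlL by (simp add: numeral_3_eq_3 numeral_2_eq_2)
  define S' where "S' m = (\<Sum>m' \<le> m. g xs m')" for m
  have A: "g L k0 * hook L (1, Suc k0) \<le> g L (Suc k0) * (L2 - Suc k0)" if k0: "Suc k0 < L2" for k0
  proof -
    define T where "T = conj_part L (k0 + 2) - 2"
    have d2: "(2, k0 + 2) \<in> diagram L" using k0 unfolding L2_def by (simp add: diag_mem[OF P])
    have c2: "2 \<le> conj_part L (k0 + 2)" using d2 diag_mem_conj[OF P] by simp
    have h2: "hook L (2, k0 + 2) = (L2 - Suc k0) + T"
      using hook_formula[OF P d2] c2 k0 unfolding T_def L2_def by simp
    have key: "T * S' k0 \<le> g xs (Suc k0) * (L2 - Suc k0)"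
    proof (cases "T = 0")
      case True then show ?thesis by simp
    next
      case False
      then have "3 \<le> conj_part L (k0 + 2)" unfolding T_def by simp
      then have "(3, k0 + 2) \<in> diagram L" using diag_mem_conj[OF P] by simp
      then have "k0 + 2 \<le> part L 3" using diag_mem[OF P] by simp
      then have r: "1 \<le> Suc k0" "Suc k0 < part xs 2" using pxs2 by auto
      have IH: "(conj_part xs (Suc (Suc k0)) - 1) * (\<Sum>m<Suc k0. g xs m) + part xs 1 * g xs 0
          \<le> (part xs 1 - Suc k0) * g xs (Suc k0)" using Cons.IH[OF Pxs r] .
      have "conj_part xs (Suc (Suc k0)) - 1 = T" using conj_tl[OF P] tlL unfolding T_def by simp
      moreover have "(\<Sum>m<Suc k0. g xs m) = S' k0" unfolding S'_def using lessThan_Suc_atMost by simp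
      ultimately have "T * S' k0 \<le> (L2 - Suc k0) * g xs (Suc k0)" using IH pxs1 by simp
      then show ?thesis by (simp add: mult.commute)
    qed
    have gk0: "g L k0 = Ap L k0 * (hook L (2, k0 + 2) * Bp L (Suc k0) * S' k0)"
      using g_expand[OF P, of k0] Bp_step[of k0 L] k0 tlL unfolding L2_def S'_def by simp
    have gk1: "g L (Suc k0) = Ap L k0 * hook L (1, Suc k0) * (Bp L (Suc k0) * (S' k0 + g xs (Suc k0)))"
      using g_expand[OF P, of "Suc k0"] Ap_Suc[of L k0] k0 tlL unfolding L2_def S'_def by simp
    have "hook L (2, k0 + 2) * S' k0 \<le> (S' k0 + g xs (Suc k0)) * (L2 - Suc k0)"
      using key h2 by (simp add: algebra_simps)
    then have "Ap L k0 * hook L (1, Suc k0) * Bp L (Suc k0) * (hook L (2, k0 + 2) * S' k0)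
        \<le> Ap L k0 * hook L (1, Suc k0) * Bp L (Suc k0) * ((S' k0 + g xs (Suc k0)) * (L2 - Suc k0))"
      by (rule mult_le_mono2)
    then show ?thesis unfolding gk0 gk1 by (simp add: algebra_simps)
  qed
  show ?case
  proof -
    have r: "1 \<le> r" "r < L2" using Cons.prems L_def L2_def by auto
    define t where "t = conj_part L (Suc r) - 1"
    have cr: "2 \<le> conj_part L (Suc r)" using conj_ge[OF P, of "Suc r" 2] r unfolding L2_def by simp
    have inv: "t * (\<Sum>m'<m. g L m') + L1 * g L 0 \<le> (L1 - m) * g L m" if "m \<le> r" for m
      using that
    proof (induction m)
      case 0 then show ?case by simp
    next
      case (Suc m)
      have IH: "t * (\<Sum>m'<m. g L m') + L1 * g L 0 \<le> (L1 - m) * g L m" using Suc by simp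
      have m2: "Suc m < L2" using Suc r by simp
      have Am: "g L m * hook L (1, Suc m) \<le> g L (Suc m) * (L2 - Suc m)" using A[OF m2] .
      have d1: "(1, Suc m) \<in> diagram L" using m2 L21 unfolding L1_def by (simp add: diag_mem[OF P])
      have c1: "conj_part L (Suc r) \<le> conj_part L (Suc m)" using conj_anti[OF P, of "Suc m" "Suc r"] Suc by simp
      have h1: "hook L (1, Suc m) = (L1 - Suc m) + conj_part L (Suc m)"
        using hook_formula[OF P d1] c1 cr unfolding L1_def by simp
      have le1: "L1 - m + t \<le> hook L (1, Suc m)" using h1 c1 cr m2 L21 unfolding t_def by simp
      have "t * (\<Sum>m'<Suc m. g L m') + L1 * g L 0 = (t * (\<Sum>m'<m. g L m') + L1 * g L 0) + t * g L m"
        by (simp add: algebra_simps)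
      also have "\<dots> \<le> (L1 - m) * g L m + t * g L m" using IH by simp
      also have "\<dots> = (L1 - m + t) * g L m" by (simp add: algebra_simps)
      also have "\<dots> \<le> hook L (1, Suc m) * g L m" using le1 by (rule mult_le_mono1)
      also have "\<dots> \<le> g L (Suc m) * (L2 - Suc m)" using Am by (simp add: mult.commute)
      also have "\<dots> \<le> g L (Suc m) * (L1 - Suc m)" using L21 by (intro mult_le_mono2) simp
      finally show ?case by (simp add: mult.commute)
    qed
    show ?thesis using inv[of r] L_def unfolding t_def L1_def L2_def by simp
  qed
qed


lemma NN_eq:
  assumes P: "is_partition L" and mu: "diagram mu = inner L"
  shows "(\<Sum>D \<in> {D \<in> excited L mu. card {c \<in> D. fst c = 1} = k}. \<Prod>c \<in> {c \<in> D. fst c \<noteq> 1}. hook L c) = g1 L k"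
proof -
  have "{D \<in> excited L mu. card {c \<in> D. fst c = 1} = k} = E L ` {nu \<in> CL L. row1len nu = k}"
  proof -
    have "{D \<in> E L ` CL L. card {c \<in> D. fst c = 1} = k} = E L ` {nu \<in> CL L. card {c \<in> E L nu. fst c = 1} = k}"
      by auto
    moreover have "{nu \<in> CL L. card {c \<in> E L nu. fst c = 1} = k} = {nu \<in> CL L. row1len nu = k}"
      using E_row1[OF P] unfolding row1len_def by auto
    ultimately show ?thesis using excited_eq[OF P mu] by simp
  qed
  moreover have "inj_on (E L) {nu \<in> CL L. row1len nu = k}"
    using E_inj[OF P] by (rule inj_on_subset) auto
  ultimately show ?thesis unfolding g1_def by (simp add: sum.reindex)
qed

lemma comb:
  fixes C :: "nat \<Rightarrow> nat" and w s a b :: nat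
  assumes pos: "\<And>j. j \<le> s \<Longrightarrow> 0 < C j"
    and eqs: "\<And>j. j < s \<Longrightarrow> j < w \<Longrightarrow> C (Suc j) = Suc j * C j"
    and lts: "\<And>j. j < s \<Longrightarrow> \<not> j < w \<Longrightarrow> C (Suc j) < Suc j * C j"
    and ab: "a < b" "b \<le> s"
  shows "C a * fact b = C b * fact a \<longleftrightarrow> b \<le> w"
proof -
  have le: "C (Suc j) \<le> Suc j * C j" if "j < s" for j
    using eqs[OF that] lts[OF that] by (cases "j < w") auto
  have mono: "C k * fact a \<le> C a * fact k \<and> (w < k \<and> a < k \<longrightarrow> C k * fact a < C a * fact k)" if "a \<le> k" "k \<le> s" "a < b" for k
    using that(1,2)
  proof (induction k rule: dec_induct)
    case base
    then show ?case using ab by simp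
  next
    case (step k)
    have ks: "k < s" using step by simp
    have IH: "C k * fact a \<le> C a * fact k" using step ks by auto
    have fa: "0 < (fact a :: nat)" by simp
    have "C (Suc k) * fact a \<le> Suc k * C k * fact a" using le[OF ks] by (rule mult_le_mono1)
    also have "\<dots> = Suc k * (C k * fact a)" by (simp only: mult.assoc)
    also have "\<dots> \<le> Suc k * (C a * fact k)" using IH(1) by (rule mult_le_mono2)
    also have "\<dots> = C a * fact (Suc k)" by (simp add: algebra_simps)
    finally have w1: "C (Suc k) * fact a \<le> C a * fact (Suc k)" .
    have w2: "C (Suc k) * fact a < C a * fact (Suc k)" if "w < Suc k"
    proof -
      have "C (Suc k) < Suc k * C k" using lts[OF ks] that by simp
      then have "C (Suc k) * fact a < Suc k * C k * fact a" using fa by simp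
      also have "\<dots> = Suc k * (C k * fact a)" by (simp only: mult.assoc)
      also have "\<dots> \<le> Suc k * (C a * fact k)" using IH(1) by (rule mult_le_mono2)
      also have "\<dots> = C a * fact (Suc k)" by (simp add: algebra_simps)
      finally show ?thesis .
    qed
    show ?case using w1 w2 by blast
  qed
  have exact: "C k = fact k * C 0" if "k \<le> w" "k \<le> s" for k
    using that
  proof (induction k)
    case 0 then show ?case by simp
  next
    case (Suc k)
    then have "C (Suc k) = Suc k * C k" using eqs[of k] by simp
    then show ?case using Suc by (simp add: algebra_simps)
  qed
  show ?thesis
  proof
    assume e: "C a * fact b = C b * fact a"
    show "b \<le> w"
    proof (rule ccontr)
      assume "\<not> b \<le> w"
      then have "w < b" by simp
      then have "C b * fact a < C a * fact b" using mono[OF less_imp_le[OF ab(1)] ab(2) ab(1)] ab(1) by blast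
      then show False using e by simp
    qed
  next
    assume "b \<le> w"
    then have "C a = fact a * C 0" "C b = fact b * C 0" using exact[of a] exact[of b] ab by linarith+
    then show "C a * fact b = C b * fact a" by (simp add: algebra_simps)
  qed
qed

theorem corollary4p6:
  fixes I :: "nat set" and a b :: nat
  assumes "finite I" and "I \<noteq> {}" and "0 \<notin> I"
    and "a < b" and "b \<le> sI I"
  shows "real (NN_coeff I a) / real (NN_coeff I b) = fact a / fact b \<longleftrightarrow> b \<le> wI I"
proof -
  interpret dset I using assms(1-3) by unfold_locales
  define lam where "lam = lamI I"
  have P: "is_partition lam" and eq12: "part lam 1 = part lam 2" using lamI_props unfolding lam_def by auto
  have mu: "diagram (muI I) = inner lam" using muI_props unfolding lam_def by auto
  define s where "s = sI I"
  have s1: "1 \<le> s" using assms(4,5) unfolding s_def by simp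
  have p1: "part lam 1 = Suc s" using s1 unfolding s_def sI_def lam_def by simp
  have p2: "part lam 2 = Suc s" using p1 eq12 by simp
  define xs where "xs = tl lam"
  have Pxs: "is_partition xs" unfolding xs_def using tl_partition[OF P] .
  define p3 where "p3 = part lam 3"
  have p3le: "p3 \<le> Suc s" unfolding p3_def using part_anti[OF P, of 2 3] p2 by simp
  have pxs1: "part xs 1 = Suc s" using part_tl[of 1 lam] p2 unfolding xs_def by (simp add: numeral_2_eq_2)
  have pxs2: "part xs 2 = p3" using part_tl[of 2 lam] unfolding xs_def p3_def by (simp add: numeral_3_eq_3 numeral_2_eq_2)
  define S' where "S' m = (\<Sum>m' \<le> m. g xs m')" for m
  define C where "C j = g1 lam (s - j)" for j
  have NN: "NN_coeff I j = C j" for j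
    unfolding NN_coeff_def C_def s_def lam_def[symmetric] using NN_eq[OF P mu] by simp
  have g1r: "g1 lam r = Bp lam r * S' r" if "r \<le> s" for r
    using g1_rec[OF P, of r] that p2 unfolding S'_def xs_def by simp
  have S'pos: "0 < S' r" for r
  proof -
    have "g xs 0 \<le> S' r" unfolding S'_def by (rule member_le_sum) auto
    then show ?thesis using g_pos[OF Pxs] by simp
  qed
  have Cpos: "0 < C j" if "j \<le> s" for j
    unfolding C_def using g1r[of "s - j"] Bp_pos[OF P] S'pos by simp
  define w where "w = Suc s - p3"
  have step: "(j < w \<longrightarrow> C (Suc j) = Suc j * C j) \<and> (\<not> j < w \<longrightarrow> C (Suc j) < Suc j * C j)" if j: "j < s" for j
  proof -
    define r0 where "r0 = s - Suc j"
    have rr: "s - j = Suc r0" "s - Suc j = r0" "s - r0 = Suc j" using j unfolding r0_def by auto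
    have r0s: "r0 + 2 \<le> part lam 2" using j p2 unfolding r0_def by simp
    have Cs: "C (Suc j) = Bp lam r0 * S' r0" unfolding C_def rr using g1r[of r0] j unfolding r0_def by simp
    have Cj: "C j = Bp lam (Suc r0) * (S' r0 + g xs (Suc r0))" unfolding C_def rr using g1r[of "Suc r0"] j
      unfolding r0_def S'_def by simp
    define T where "T = conj_part lam (r0 + 2) - 2"
    have d2: "(2, r0 + 2) \<in> diagram lam" using r0s by (simp add: diag_mem[OF P])
    have c2: "2 \<le> conj_part lam (r0 + 2)" using d2 diag_mem_conj[OF P] by simp
    have h2: "hook lam (2, r0 + 2) = Suc j + T"
      using hook_formula[OF P d2] c2 p2 rr unfolding T_def by simp
    have Bp0: "Bp lam r0 = (Suc j + T) * Bp lam (Suc r0)" using Bp_step[OF r0s] h2 by simp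
    have Bpos: "0 < Bp lam (Suc r0)" using Bp_pos[OF P] by simp
    have T0: "T = 0 \<longleftrightarrow> j < w"
    proof -
      have "T \<noteq> 0 \<longleftrightarrow> 3 \<le> conj_part lam (r0 + 2)" unfolding T_def by auto
      also have "\<dots> \<longleftrightarrow> (3, r0 + 2) \<in> diagram lam" using diag_mem_conj[OF P] by simp
      also have "\<dots> \<longleftrightarrow> r0 + 2 \<le> p3" using diag_mem[OF P] unfolding p3_def by simp
      also have "\<dots> \<longleftrightarrow> \<not> j < w" unfolding w_def using p3le j rr unfolding r0_def by auto
      finally show ?thesis by blast
    qed
    show ?thesis
    proof (cases "T = 0")
      case True
      have "g xs (Suc r0) = 0" using g_zero[OF Pxs, of "Suc r0"] pxs2 True T0 j unfolding w_def r0_def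
        by simp
      then show ?thesis using True T0 Cs Cj Bp0 by (simp add: algebra_simps)
    next
      case False
      then have "r0 + 2 \<le> p3" using T0 unfolding w_def using p3le j rr unfolding r0_def by auto
      then have r: "1 \<le> Suc r0" "Suc r0 < part xs 2" using pxs2 by auto
      have mi: "(conj_part xs (Suc (Suc r0)) - 1) * (\<Sum>m<Suc r0. g xs m) + part xs 1 * g xs 0
          \<le> (part xs 1 - Suc r0) * g xs (Suc r0)" using main_ineq[OF Pxs r] .
      have e1: "conj_part xs (Suc (Suc r0)) - 1 = T" using conj_tl[OF P] unfolding T_def xs_def by simp
      have e2: "(\<Sum>m<Suc r0. g xs m) = S' r0" unfolding S'_def using lessThan_Suc_atMost by simp
      have e3: "part xs 1 - Suc r0 = Suc j" using pxs1 rr by simp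
      have e4: "0 < part xs 1 * g xs 0" using pxs1 g_pos[OF Pxs] by simp
      have "T * S' r0 + part xs 1 * g xs 0 \<le> Suc j * g xs (Suc r0)" using mi unfolding e1 e2 e3 .
      then have key: "T * S' r0 < Suc j * g xs (Suc r0)" using e4 by linarith
      have "C (Suc j) = Bp lam (Suc r0) * (Suc j * S' r0 + T * S' r0)" using Cs Bp0 by (simp add: algebra_simps)
      also have "\<dots> < Bp lam (Suc r0) * (Suc j * S' r0 + Suc j * g xs (Suc r0))" using key Bpos by simp
      also have "\<dots> = Suc j * C j" using Cj by (simp add: algebra_simps)
      finally show ?thesis using T0 False by simp
    qed
  qed
  have wI: "wI I = w"
  proof -
    have "{j. 1 \<le> j \<and> j \<le> sI I + 1 \<and> conj_part (lamI I) j = 2} = {Suc p3..Suc s}"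
    proof (rule set_eqI)
      fix j
      show "j \<in> {j. 1 \<le> j \<and> j \<le> sI I + 1 \<and> conj_part (lamI I) j = 2} \<longleftrightarrow> j \<in> {Suc p3..Suc s}"
      proof (cases "1 \<le> j \<and> j \<le> Suc s")
        case True
        have c2: "2 \<le> conj_part lam j" using conj_ge[OF P, of j 2] True p2 by simp
        have "3 \<le> conj_part lam j \<longleftrightarrow> (3, j) \<in> diagram lam" using diag_mem_conj[OF P] by simp
        also have "\<dots> \<longleftrightarrow> j \<le> p3" using diag_mem[OF P] True unfolding p3_def by simp
        finally have "conj_part lam j = 2 \<longleftrightarrow> \<not> j \<le> p3" using c2 by auto
        then show ?thesis using True unfolding lam_def s_def by auto
      next
        case False
        then show ?thesis unfolding s_def using p3le by auto
      qed
    qed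
    then show ?thesis unfolding wI_def w_def by simp
  qed
  have comb_res: "C a * fact b = C b * fact a \<longleftrightarrow> b \<le> w"
    by (rule comb[of s C w a b]) (use Cpos step assms(4,5) in \<open>auto simp: s_def\<close>)
  have Ca: "0 < C a" "0 < C b" using Cpos assms(4,5) unfolding s_def by auto
  have "real (C a) / real (C b) = fact a / fact b \<longleftrightarrow> real (C a) * fact b = fact a * real (C b)"
    using Ca by (simp add: frac_eq_eq)
  also have "\<dots> \<longleftrightarrow> C a * fact b = C b * fact a"
  proof -
    have "real (C a) * fact b = real (C a * fact b)" by simp
    moreover have "fact a * real (C b) = real (C b * fact a)" by simp
    ultimately show ?thesis by (metis of_nat_eq_iff)
  qed
  finally show ?thesis unfolding NN wI comb_res .
qed


end
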